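(* Let $A_\alpha$ be the adjacency operator with a periodic magnetic potential $\alpha$ on a periodic graph $\mathcal G$. Then its total bandwidth satisfies, for every $n\in\mathbb N$, $$\mathfrak S(A_\alpha)\ge\frac{\max\{\widetilde B_{\alpha,n}^+,2\widetilde B_{\alpha,n}^{odd}\}}{n\varkappa_+^{\,n-1}},\qquad \widetilde B_{\alpha,n}^+=\Big|\sum_{\mathbf c\in\mathcal C_n^+}\cos\alpha(\mathbf c)\Big|,\quad \widetilde B_{\alpha,n}^{odd}=\Big|\sum_{\mathbf c\in\mathcal C_n^{odd}}\cos\alpha(\mathbf c)\Big|.$$
   Context: Let $\Gamma\subset\mathbb R^d$ be a lattice with basis $\mathfrak a_1,\dots,\mathfrak a_d$ and fundamental cell $\Omega=\{\sum_sx_s\mathfrak a_s:(x_s)\in[0,1)^d\}$. Let $\mathcal G=(\mathcal V,\mathcal E)$ be a connected, locally finite, infinite graph embedded in $\mathbb R^d$ (loops, multiple edges allowed), invariant under $\Gamma$-translations, with finite quotient $\mathcal G_*=(\mathcal V_*,\mathcal E_* )$; $\nu=\#\mathcal V_*$. Oriented edges $\mathcal A,\mathcal A_*$; $\underline{\mathbf e}$ inverse; $\varkappa_x$ = number of oriented edges starting at $x$ (loops counted twice); $\varkappa_+=\max_{\mathcal V_*}\varkappa_x$. Edge index: $x=x_0+[x]$, $x_0\in\mathcal V\cap\Omega$, $[x]\in\Gamma$ with coordinates $[x]_{\mathbb A}\in\mathbb Z^d$; $\tau((x,y))=[y]_{\mathbb A}-[x]_{\mathbb A}$, defined on $\mathcal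 A_*$. Periodic magnetic potential $\alpha:\mathcal A\to\mathbb R$ with $\alpha(\underline{\mathbf e})=-\alpha(\mathbf e)$, $\Gamma$-invariant. $(A_\alpha f)_x=\sum_{\mathbf e=(x,y)\in\mathcal A}e^{i\alpha(\mathbf e)}f_y$ on $\ell^2(\mathcal V)$; fiber operators $(A_\alpha(k)f)_x=\sum_{\mathbf e=(x,y)\in\mathcal A_*}e^{i(\alpha(\mathbf e)+\langle\tau(\mathbf e),k\rangle)}f_y$ on $\mathbb C^\nu$, $k\in\mathbb T^d=\mathbb R^d/(2\pi\mathbb Z)^d$, with eigenvalues $\lambda^o_{\alpha,1}(k)\le\dots\le\lambda^o_{\alpha,\nu}(k)$; bands $\sigma_j(A_\alpha)=\lambda^o_{\alpha,j}(\mathbb T^d)$; $\mathfrak S(A_\alpha)=\sum_j|\sigma_j(A_\alpha)|$. Cycles of $\mathcal G_*$: ordered sequences of oriented edges $(\mathbf e_1,\dots,\mathbf e_n)$, $\mathbf e_s=(x_{s-1},x_s)$, $x_n=x_0$ (cyclic shifts distinct, backtracking allowed); index $\tau(\mathbf c)=\sum\tau(\mathbf e)$; flux $\alpha(\mathbf c)=(\sum\alpha(\mathbf e))\bmod 2\pi$. $\mathcal C_n^+$: cycles of length $n$ with non-zero index; $\mathcal C_n^{odd}$: cycles of length $n$ with $\langle\tau(\mathbf c),(1,\dots,1)\rangle$ odd. *)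

theory Defs
  imports "HOL-Analysis.Analysis" "HOL-Computational_Algebra.Polynomial" "HOL-Library.Multiset"
begin

text \<open>The periodic graph is described through its finite quotient: vertices of type 'v
 (the set V_*), oriented edges of type 'e (the set A_*), with source/target maps,
 the edge inversion, the edge index tau (values in Z^d, d = CARD('d)) and the
 magnetic potential alpha on oriented edges.\<close>

definition inner_idx :: "int^'d \<Rightarrow> real^'d \<Rightarrow> real" where
  "inner_idx m k = (\<Sum>j\<in>UNIV. of_int (m $ j) * k $ j)"

definition fiber_matrix ::
  "('e::finite \<Rightarrow> 'v::finite) \<Rightarrow> ('e \<Rightarrow> 'v) \<Rightarrow> ('e \<Rightarrow> real) \<Rightarrow> ('e \<Rightarrow> int^'d) \<Rightarrow> real^'d \<Rightarrow> complex^'v^'v" where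
  "fiber_matrix src tgt \<alpha> \<tau> k =
     (\<chi> x y. \<Sum>e\<in>{e. src e = x \<and> tgt e = y}. cis (\<alpha> e + inner_idx (\<tau> e) k))"

definition charpoly_mat :: "complex^'v::finite^'v \<Rightarrow> complex poly" where
  "charpoly_mat M = det (\<chi> i j. (if i = j then [:0, 1:] else 0) - [: M $ i $ j :])"

text \<open>Eigenvalues counted with multiplicity, in increasing order (0-indexed):
  lambda_{j+1}(k) of the paper is band_fun ... j k.\<close>
definition eigenvalues_sorted :: "complex^'v::finite^'v \<Rightarrow> real list" where
  "eigenvalues_sorted M = sorted_list_of_multiset (image_mset Re (proots (charpoly_mat M)))"

definition band_fun ::
  "('e::finite \<Rightarrow> 'v::finite) \<Rightarrow> ('e \<Rightarrow> 'v) \<Rightarrow> ('e \<Rightarrow> real) \<Rightarrow> ('e \<Rightarrow> int^'d) \<Rightarrow> nat \<Rightarrow> real^'d \<Rightarrow> real" where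
  "band_fun src tgt \<alpha> \<tau> j k = eigenvalues_sorted (fiber_matrix src tgt \<alpha> \<tau> k) ! j"

text \<open>Total bandwidth: sum of the Lebesgue measures of the bands
  sigma_j = lambda_j(T^d) (k ranges over R^d; the fiber operators are 2pi-periodic in k).\<close>
definition total_bandwidth ::
  "('e::finite \<Rightarrow> 'v::finite) \<Rightarrow> ('e \<Rightarrow> 'v) \<Rightarrow> ('e \<Rightarrow> real) \<Rightarrow> ('e \<Rightarrow> int^'d) \<Rightarrow> real" where
  "total_bandwidth src tgt \<alpha> \<tau> =
     (\<Sum>j<CARD('v). measure lborel (range (band_fun src tgt \<alpha> \<tau> j)))"

definition is_walk :: "('e \<Rightarrow> 'v) \<Rightarrow> ('e \<Rightarrow> 'v) \<Rightarrow> 'v \<Rightarrow> 'v \<Rightarrow> 'e list \<Rightarrow> bool" where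
  "is_walk src tgt x y c =
     (if c = [] then x = y
      else src (hd c) = x \<and> tgt (last c) = y \<and>
           (\<forall>i < length c - 1. tgt (c ! i) = src (c ! (i + 1))))"

definition is_cycle :: "('e \<Rightarrow> 'v) \<Rightarrow> ('e \<Rightarrow> 'v) \<Rightarrow> 'e list \<Rightarrow> bool" where
  "is_cycle src tgt c =
     (c \<noteq> [] \<and> (\<forall>i < length c. tgt (c ! i) = src (c ! ((i + 1) mod length c))))"

definition walk_index :: "('e \<Rightarrow> int^'d) \<Rightarrow> 'e list \<Rightarrow> int^'d" where
  "walk_index \<tau> c = sum_list (map \<tau> c)"

definition flux :: "('e \<Rightarrow> real) \<Rightarrow> 'e list \<Rightarrow> real" where
  "flux \<alpha> c = sum_list (map \<alpha> c)"

definition cycles_plus ::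
  "('e \<Rightarrow> 'v) \<Rightarrow> ('e \<Rightarrow> 'v) \<Rightarrow> ('e \<Rightarrow> int^'d) \<Rightarrow> nat \<Rightarrow> 'e list set" where
  "cycles_plus src tgt \<tau> n =
     {c. length c = n \<and> is_cycle src tgt c \<and> walk_index \<tau> c \<noteq> 0}"

definition cycles_odd ::
  "('e \<Rightarrow> 'v) \<Rightarrow> ('e \<Rightarrow> 'v) \<Rightarrow> ('e \<Rightarrow> int^'d) \<Rightarrow> nat \<Rightarrow> 'e list set" where
  "cycles_odd src tgt \<tau> n =
     {c. length c = n \<and> is_cycle src tgt c \<and> odd (\<Sum>j\<in>UNIV. walk_index \<tau> c $ j)}"

definition degree_at :: "('e::finite \<Rightarrow> 'v) \<Rightarrow> 'v \<Rightarrow> nat" where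
  "degree_at src x = card {e. src e = x}"

definition max_degree :: "('e::finite \<Rightarrow> 'v::finite) \<Rightarrow> nat" where
  "max_degree src = Max (range (degree_at src))"

end

theory Submission
  imports Defs "Jordan_Normal_Form.Schur_Decomposition"
begin

no_notation Matrix.vec_index (infixl \<open>$\<close> 100)
no_notation m_inv (\<open>(\<open>open_block notation=\<open>prefix inv\<close>\<close>inv\<index> _)\<close> [81] 80)


definition idx :: "'a::finite \<Rightarrow> nat" where
  "idx = (SOME h. bij_betw h (UNIV::'a set) {..<CARD('a)})"

lemma idx_bij: "bij_betw (idx :: 'a::finite \<Rightarrow> nat) UNIV {..<CARD('a)}"
proof -
  have "\<exists>h. bij_betw h (UNIV::'a set) {..<CARD('a)}"
    using ex_bij_betw_finite_nat[of "UNIV::'a set"] by (auto simp: atLeast0LessThan)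
  then show ?thesis unfolding idx_def by (rule someI_ex)
qed

definition unidx :: "nat \<Rightarrow> 'a::finite" where
  "unidx = the_inv_into UNIV idx"

lemma idx_inj: "inj (idx :: 'a::finite \<Rightarrow> nat)"
  using idx_bij bij_betw_def by blast

lemma idx_less[simp]: "idx (x::'a::finite) < CARD('a)"
  using idx_bij[where 'a='a] by (auto simp: bij_betw_def)

lemma unidx_idx[simp]: "unidx (idx (x::'a::finite)) = x"
  unfolding unidx_def by (rule the_inv_f_f[OF idx_inj])

lemma idx_unidx[simp]: "i < CARD('a) \<Longrightarrow> idx (unidx i :: 'a::finite) = i"
  unfolding unidx_def using idx_bij[where 'a='a]
  by (metis bij_betw_def f_the_inv_into_f lessThan_iff)

lemma idx_eq_iff[simp]: "idx (x::'a::finite) = idx y \<longleftrightarrow> x = y"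
  using idx_inj by (auto dest: injD)

lemma sum_idx: "(\<Sum>i<CARD('a::finite). h i) = (\<Sum>x\<in>(UNIV::'a set). h (idx x))"
  using sum.reindex_bij_betw[OF idx_bij[where 'a='a], of h] by simp

lemma sum_idx0: "(\<Sum>i=0..<CARD('a::finite). h i) = (\<Sum>x\<in>(UNIV::'a set). h (idx x))"
  using sum_idx[where 'a='a] by (simp add: atLeast0LessThan)

definition to_mat :: "'b^'a::finite^'a \<Rightarrow> 'b Matrix.mat" where
  "to_mat M = Matrix.mat CARD('a) CARD('a) (\<lambda>(i,j). M $ unidx i $ unidx j)"

definition to_vm :: "'b Matrix.mat \<Rightarrow> 'b^'a::finite^'a" where
  "to_vm X = (\<chi> i j. X $$ (idx i, idx j))"

lemma to_mat_carrier[simp]: "to_mat (M::'b^'a::finite^'a) \<in> carrier_mat CARD('a) CARD('a)"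
  by (simp add: to_mat_def)

lemma to_vm_to_mat[simp]: "to_vm (to_mat M) = M"
  by (simp add: to_vm_def to_mat_def vec_eq_iff)

lemma to_vm_mult:
  assumes "X \<in> carrier_mat CARD('a) CARD('a)" "Y \<in> carrier_mat CARD('a) CARD('a)"
  shows "(to_vm (X * Y) :: 'b::comm_semiring_1^'a::finite^'a) = to_vm X ** to_vm Y"
  using assms
  by (simp add: to_vm_def matrix_matrix_mult_def vec_eq_iff scalar_prod_def sum_idx0)

lemma to_vm_one: "(to_vm (1\<^sub>m CARD('a)) :: 'b::comm_semiring_1^'a::finite^'a) = Finite_Cartesian_Product.mat 1"
  by (simp add: to_vm_def vec_eq_iff Finite_Cartesian_Product.mat_def)

lemma schur_vec:
  fixes M :: "complex^'a::finite^'a"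
  shows "\<exists>(P::complex^'a^'a) (B::complex^'a^'a) (Q::complex^'a^'a). P ** Q = Finite_Cartesian_Product.mat 1 \<and> Q ** P = Finite_Cartesian_Product.mat 1
     \<and> M = P ** B ** Q \<and> (\<forall>i j. idx j < idx i \<longrightarrow> B $ i $ j = 0)
     \<and> (\<forall>i. poly (char_poly (to_mat M)) (B $ i $ i) = 0)"
proof -
  let ?n = "CARD('a)"
  let ?A = "to_mat M"
  have A: "?A \<in> carrier_mat ?n ?n" by simp
  obtain es where es: "char_poly ?A = (\<Prod>a\<leftarrow>es. [:- a, 1:])" "length es = ?n"
    using char_poly_factorized[OF A] by blast
  obtain B P Q where sd: "schur_decomposition ?A es = (B,P,Q)" by (cases "schur_decomposition ?A es") auto
  from schur_decomposition[OF A es(1) sd]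
  have sim: "similar_mat_wit ?A B P Q" and ut: "upper_triangular B" and dg: "diag_mat B = es" by auto
  note sw = similar_mat_witD2[OF A sim]
  have c: "B \<in> carrier_mat ?n ?n" "P \<in> carrier_mat ?n ?n" "Q \<in> carrier_mat ?n ?n"
    using sw by auto
  have PQ: "P * Q = 1\<^sub>m ?n" and QP: "Q * P = 1\<^sub>m ?n" and APBQ: "?A = P * B * Q"
    using sw by auto
  have f1: "to_vm P ** to_vm Q = (Finite_Cartesian_Product.mat 1 :: complex^'a^'a)"
    using to_vm_mult[OF c(2) c(3)] PQ to_vm_one by metis
  have f2: "to_vm Q ** to_vm P = (Finite_Cartesian_Product.mat 1 :: complex^'a^'a)"
    using to_vm_mult[OF c(3) c(2)] QP to_vm_one by metis
  have f3: "M = to_vm P ** to_vm B ** (to_vm Q :: complex^'a^'a)"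
  proof -
    have "M = to_vm (P * B * Q)" using APBQ by (metis to_vm_to_mat)
    also have "\<dots> = to_vm (P * B) ** to_vm Q" using c by (intro to_vm_mult) auto
    also have "\<dots> = to_vm P ** to_vm B ** to_vm Q" using c to_vm_mult by metis
    finally show ?thesis .
  qed
  have f4: "\<forall>i j. idx j < idx i \<longrightarrow> (to_vm B :: complex^'a^'a) $ i $ j = 0"
  proof (intro allI impI)
    fix i j :: 'a assume ij: "idx j < idx i"
    have "idx i < dim_row B" using c(1) by simp
    thus "(to_vm B :: complex^'a^'a) $ i $ j = 0" using ut ij unfolding upper_triangular_def to_vm_def by simp
  qed
  have f5: "\<forall>i. poly (char_poly ?A) ((to_vm B :: complex^'a^'a) $ i $ i) = 0"
  proof
    fix i :: 'a
    have "es ! idx i = B $$ (idx i, idx i)" unfolding dg[symmetric] diag_mat_def using c(1) by simp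
    moreover have "es ! idx i \<in> set es" using es(2) by simp
    ultimately show "poly (char_poly ?A) ((to_vm B :: complex^'a^'a) $ i $ i) = 0"
      unfolding es(1) to_vm_def by (auto simp: poly_prod_list prod_list_zero_iff)
  qed
  show ?thesis
    apply (rule exI, rule exI, rule exI)
    apply (intro conjI)
    apply (rule f1) apply (rule f2) apply (rule f3) apply (rule f4) apply (rule f5) done
qed

lemma eigvec_vec:
  fixes M :: "complex^'a::finite^'a"
  assumes "poly (char_poly (to_mat M)) z = 0"
  shows "\<exists>v. v \<noteq> 0 \<and> M *v v = z *s v"
proof -
  let ?n = "CARD('a)"
  have A: "to_mat M \<in> carrier_mat ?n ?n" by simp
  from assms eigenvalue_root_char_poly[OF A] obtain v where ev: "eigenvector (to_mat M) v z"
    unfolding eigenvalue_def by blast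
  hence vc: "v \<in> carrier_vec ?n" and v0: "v \<noteq> 0\<^sub>v ?n" and Av: "to_mat M *\<^sub>v v = z \<cdot>\<^sub>v v"
    unfolding eigenvector_def using A by auto
  define w :: "complex^'a" where "w = (\<chi> x. vec_index v (idx x))"
  have "\<exists>i<?n. vec_index v i \<noteq> 0"
  proof (rule ccontr)
    assume "\<not> (\<exists>i<?n. vec_index v i \<noteq> 0)"
    hence "v = 0\<^sub>v ?n" using vc by (intro eq_vecI) auto
    with v0 show False by simp
  qed
  then obtain i where i: "i < ?n" "vec_index v i \<noteq> 0" by blast
  have "w $ unidx i \<noteq> 0" unfolding w_def using i by simp
  hence "w \<noteq> 0" by auto
  moreover have "M *v w = z *s w"
    unfolding Finite_Cartesian_Product.vec_eq_iff
  proof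
    fix x :: 'a
    have "vec_index (to_mat M *\<^sub>v v) (idx x) = vec_index (z \<cdot>\<^sub>v v) (idx x)" using Av by simp
    hence "(\<Sum>j=0..<?n. M $ x $ unidx j * vec_index v j) = z * vec_index v (idx x)"
      using vc by (simp add: scalar_prod_def to_mat_def)
    thus "(M *v w) $ x = (z *s w) $ x"
      by (simp add: matrix_vector_mult_def w_def sum_idx0)
  qed
  ultimately show ?thesis by blast
qed



fun mpow :: "'a::semiring_1^'n^'n \<Rightarrow> nat \<Rightarrow> 'a^'n^'n" where
  "mpow M 0 = Finite_Cartesian_Product.mat 1"
| "mpow M (Suc n) = M ** mpow M n"

definition cm :: "'a::comm_ring_1^'n^'n \<Rightarrow> 'a poly^'n^'n" where
  "cm A = (\<chi> i j. [:A$i$j:])"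

lemma const_poly_sum: "[:sum f A:] = (\<Sum>x\<in>A. [:f x:])"
proof (induct A rule: infinite_finite_induct)
  case (insert x F)
  have "[:f x + sum f F:] = [:f x:] + [:sum f F:]" by simp
  with insert show ?case by simp
qed simp_all

lemma cm_mult: "cm (A ** B) = cm A ** cm B"
  by (simp add: cm_def matrix_matrix_mult_def Finite_Cartesian_Product.vec_eq_iff const_poly_sum mult.commute)

lemma cm_one: "cm (Finite_Cartesian_Product.mat 1) = Finite_Cartesian_Product.mat 1"
  by (simp add: cm_def Finite_Cartesian_Product.mat_def Finite_Cartesian_Product.vec_eq_iff)

lemma mat_comm: "(A::'a::comm_ring_1^'n^'n) ** Finite_Cartesian_Product.mat c = Finite_Cartesian_Product.mat c ** A"
  by (simp add: matrix_matrix_mult_def Finite_Cartesian_Product.mat_def Finite_Cartesian_Product.vec_eq_iff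
      if_distrib if_distribR sum.delta sum.delta' mult.commute cong: if_cong)

definition utri :: "'a::zero^'n::finite^'n \<Rightarrow> bool" where
  "utri A = (\<forall>i j. idx j < idx i \<longrightarrow> A $ i $ j = 0)"

lemma perm_idx_decr:
  assumes p: "p permutes (UNIV::'n::finite set)" and np: "p \<noteq> id"
  shows "\<exists>i. idx (p i) < idx i"
proof (rule ccontr)
  assume "\<not> ?thesis"
  hence le: "\<And>i. idx i \<le> idx (p i)" by (simp add: not_less)
  have "(\<Sum>i\<in>UNIV. idx (p i)) = (\<Sum>i\<in>(UNIV::'n set). idx i)"
    using sum.reindex_bij_betw[OF permutes_imp_bij[OF p], of idx] by simp
  hence "\<And>i. idx i = idx (p i)"
    using sum_mono_inv[of idx UNIV "\<lambda>i. idx (p i)"] le by (metis finite UNIV_I)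
  hence "\<And>i. p i = i" by simp
  with np show False by auto
qed

lemma det_utri:
  fixes A :: "'a::comm_ring_1^'n::finite^'n"
  assumes "utri A"
  shows "Determinants.det A = (\<Prod>i\<in>UNIV. A $ i $ i)"
proof -
  let ?U = "UNIV:: 'n set"
  let ?PU = "{p. p permutes ?U}"
  let ?pp = "(\<lambda>p. of_int (sign p) * prod (\<lambda>i. A$i$p i) (UNIV :: 'n set))"
  have fU: "finite ?U" by simp
  have id0: "{id} \<subseteq> ?PU" by (auto simp: permutes_id)
  have p0: "\<forall>p \<in> ?PU -{id}. ?pp p = 0"
  proof
    fix p
    assume p: "p \<in> ?PU - {id}"
    then obtain i where i: "idx (p i) < idx i"
      using perm_idx_decr by blast
    from assms i have "\<exists>i \<in> ?U. A$i$p i = 0" unfolding utri_def by blast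
    with prod_zero[OF fU] show "?pp p = 0" by force
  qed
  from sum.mono_neutral_cong_left[OF finite_permutations[OF fU] id0 p0] show ?thesis
    unfolding Determinants.det_def by (simp add: sign_id)
qed

lemma utri_mult:
  fixes X Y :: "'a::comm_semiring_1^'n::finite^'n"
  assumes "utri X" "utri Y"
  shows "utri (X ** Y)" "\<And>i. (X ** Y) $ i $ i = X $ i $ i * Y $ i $ i"
proof -
  show "utri (X ** Y)" unfolding utri_def
  proof (intro allI impI)
    fix i j :: 'n assume ij: "idx j < idx i"
    have "\<And>l. X $ i $ l * Y $ l $ j = 0"
    proof -
      fix l show "X $ i $ l * Y $ l $ j = 0"
        using assms ij unfolding utri_def by (cases "idx l < idx i") (auto simp: not_less)
    qed
    thus "(X ** Y) $ i $ j = 0" by (simp add: matrix_matrix_mult_def)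
  qed
  fix i :: 'n
  have "\<And>l. l \<noteq> i \<Longrightarrow> X $ i $ l * Y $ l $ i = 0"
  proof -
    fix l assume "l \<noteq> i"
    hence "idx l \<noteq> idx i" by simp
    thus "X $ i $ l * Y $ l $ i = 0"
      using assms unfolding utri_def by (metis linorder_neqE_nat mult_zero_left mult_zero_right)
  qed
  hence "(\<Sum>l\<in>UNIV. X $ i $ l * Y $ l $ i) = X $ i $ i * Y $ i $ i"
    by (subst sum.remove[of _ i]) auto
  thus "(X ** Y) $ i $ i = X $ i $ i * Y $ i $ i" by (simp add: matrix_matrix_mult_def)
qed

lemma utri_mpow:
  fixes B :: "'a::comm_semiring_1^'n::finite^'n"
  assumes "utri B"
  shows "utri (mpow B n) \<and> (\<forall>i. mpow B n $ i $ i = (B $ i $ i) ^ n)"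
proof (induct n)
  case 0
  then show ?case by (auto simp: utri_def Finite_Cartesian_Product.mat_def)
next
  case (Suc n)
  then show ?case using utri_mult[OF assms, of "mpow B n"] by simp
qed

lemma mpow_sim:
  assumes PQ: "Q ** P = Finite_Cartesian_Product.mat 1" and PQ': "P ** Q = Finite_Cartesian_Product.mat 1"
    and M: "M = P ** B ** Q"
  shows "mpow M n = P ** mpow B n ** Q"
proof (induct n)
  case 0
  then show ?case using PQ' by (simp add: matrix_mul_rid)
next
  case (Suc n)
  have "mpow M (Suc n) = (P ** B ** Q) ** (P ** mpow B n ** Q)" using Suc M by simp
  also have "\<dots> = P ** B ** (Q ** P) ** mpow B n ** Q" by (simp add: matrix_mul_assoc)
  also have "\<dots> = P ** mpow B (Suc n) ** Q" using PQ by (simp add: matrix_mul_assoc matrix_mul_rid)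
  finally show ?case .
qed

lemma matrix_sub_ldistrib: "(A::'a::comm_ring_1^'n^'m) ** (B - C) = A ** B - A ** C"
  by (simp add: matrix_matrix_mult_def Finite_Cartesian_Product.vec_eq_iff sum_subtractf right_diff_distrib)

lemma matrix_sub_rdistrib: "((B::'a::comm_ring_1^'n^'m) - C) ** A = B ** A - C ** A"
  by (simp add: matrix_matrix_mult_def Finite_Cartesian_Product.vec_eq_iff sum_subtractf left_diff_distrib)

lemma charpoly_sim:
  fixes M P B Q :: "complex^'n::finite^'n"
  assumes PQ: "P ** Q = Finite_Cartesian_Product.mat 1" and QP: "Q ** P = Finite_Cartesian_Product.mat 1"
    and M: "M = P ** B ** Q" and ut: "utri B"
  shows "charpoly_mat M = (\<Prod>i\<in>UNIV. [:- (B $ i $ i), 1:])"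
proof -
  let ?X = "Finite_Cartesian_Product.mat [:0, 1:] :: complex poly^'n^'n"
  have cp: "charpoly_mat M = Determinants.det (?X - cm M)"
    unfolding charpoly_mat_def
    by (rule arg_cong[where f = Determinants.det])
      (simp add: Finite_Cartesian_Product.vec_eq_iff cm_def Finite_Cartesian_Product.mat_def)
  have XPQ: "cm P ** ?X ** cm Q = ?X"
  proof -
    have "cm P ** ?X ** cm Q = ?X ** cm P ** cm Q" by (simp add: mat_comm)
    also have "\<dots> = ?X ** (cm P ** cm Q)" by (simp add: matrix_mul_assoc)
    also have "\<dots> = ?X" using PQ by (simp add: cm_mult[symmetric] cm_one matrix_mul_rid)
    finally show ?thesis .
  qed
  have "?X - cm M = cm P ** (?X - cm B) ** cm Q"
    using XPQ M by (simp add: cm_mult matrix_sub_ldistrib matrix_sub_rdistrib matrix_mul_assoc)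
  hence "Determinants.det (?X - cm M) = Determinants.det (cm P) * Determinants.det (?X - cm B) * Determinants.det (cm Q)"
    by (simp add: det_mul)
  also have "\<dots> = Determinants.det (?X - cm B) * Determinants.det (cm P ** cm Q)"
    by (simp add: det_mul)
  also have "\<dots> = Determinants.det (?X - cm B)"
    using PQ by (simp add: cm_mult[symmetric] cm_one det_I)
  also have "\<dots> = (\<Prod>i\<in>UNIV. (?X - cm B) $ i $ i)"
    by (rule det_utri) (use ut in \<open>auto simp: utri_def cm_def Finite_Cartesian_Product.mat_def\<close>)
  also have "\<dots> = (\<Prod>i\<in>UNIV. [:- (B $ i $ i), 1:])"
    by (simp add: cm_def Finite_Cartesian_Product.mat_def)
  finally show ?thesis using cp by simp
qed

lemma trace_sim:
  fixes M P B Q :: "complex^'n::finite^'n"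
  assumes PQ: "P ** Q = Finite_Cartesian_Product.mat 1" and QP: "Q ** P = Finite_Cartesian_Product.mat 1"
    and M: "M = P ** B ** Q" and ut: "utri B"
  shows "trace (mpow M n) = (\<Sum>i\<in>UNIV. (B $ i $ i) ^ n)"
proof -
  have "trace (mpow M n) = trace (P ** (mpow B n ** Q))"
    using mpow_sim[OF QP PQ M] by (simp add: matrix_mul_assoc)
  also have "\<dots> = trace ((mpow B n ** Q) ** P)" by (rule trace_mul_sym)
  also have "\<dots> = trace (mpow B n)" using QP by (simp add: matrix_mul_assoc[symmetric] matrix_mul_rid)
  also have "\<dots> = (\<Sum>i\<in>UNIV. (B $ i $ i) ^ n)"
    using utri_mpow[OF ut, of n] by (simp add: trace_def)
  finally show ?thesis .
qed



lemma herm_eig_real: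
  fixes M :: "complex^'n::finite^'n"
  assumes herm: "\<forall>x y. M$y$x = cnj (M$x$y)" and ev: "M *v v = z *s v" and v0: "v \<noteq> 0"
  shows "Im z = 0"
proof -
  define q where "q = (\<Sum>x\<in>UNIV. cnj (v$x) * (M *v v)$x)"
  define r where "r = (\<Sum>x\<in>UNIV. (cmod (v$x))^2)"
  have q1: "q = z * complex_of_real r"
  proof -
    have "q = (\<Sum>x\<in>UNIV. z * (cnj (v$x) * v$x))" unfolding q_def ev by (simp add: ac_simps)
    also have "\<dots> = z * (\<Sum>x\<in>UNIV. complex_of_real ((cmod (v$x))^2))"
    proof -
      have "\<And>x. cnj (v$x) * v$x = complex_of_real ((cmod (v$x))^2)"
        by (metis complex_norm_square mult.commute of_real_power)
      thus ?thesis by (simp add: sum_distrib_left)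
    qed
    finally show ?thesis unfolding r_def by simp
  qed
  have hs: "\<And>x y. cnj (M$x$y) = M$y$x" using herm by metis
  have "cnj q = (\<Sum>x\<in>UNIV. \<Sum>y\<in>UNIV. v$x * cnj (M$x$y) * cnj (v$y))"
    unfolding q_def by (simp add: matrix_vector_mult_def sum_distrib_left ac_simps)
  also have "\<dots> = (\<Sum>x\<in>UNIV. \<Sum>y\<in>UNIV. v$x * M$y$x * cnj (v$y))"
    by (simp only: hs)
  also have "\<dots> = (\<Sum>y\<in>UNIV. \<Sum>x\<in>UNIV. v$x * M$y$x * cnj (v$y))"
    by (rule sum.swap)
  also have "\<dots> = q"
    unfolding q_def by (simp add: matrix_vector_mult_def sum_distrib_left ac_simps)
  finally have "cnj q = q" .
  hence "Im (cnj q) = Im q" by (rule arg_cong)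
  hence imq: "Im q = 0" by simp
  have "r > 0"
  proof -
    obtain x where "v$x \<noteq> 0" using v0 by (metis Finite_Cartesian_Product.vec_eq_iff zero_index)
    hence "(cmod (v$x))^2 > 0" by simp
    moreover have "(cmod (v$x))^2 \<le> r" unfolding r_def
      by (rule member_le_sum) auto
    ultimately show ?thesis by linarith
  qed
  from imq q1 have "Im z * r = 0" by simp
  with \<open>r > 0\<close> show ?thesis by simp
qed

lemma row_bound_eig:
  fixes M :: "complex^'n::finite^'n"
  assumes rb: "\<forall>x. (\<Sum>y\<in>UNIV. cmod (M$x$y)) \<le> D" and ev: "M *v v = z *s v" and v0: "v \<noteq> 0"
  shows "cmod z \<le> D"
proof -
  have "Max (range (\<lambda>x. cmod (v$x))) \<in> range (\<lambda>x. cmod (v$x))"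
    by (rule Max_in) (simp_all add: finite_imageI)
  then obtain x0 where x0: "cmod (v$x0) = Max (range (\<lambda>x. cmod (v$x)))" by (metis imageE)
  have mx: "\<And>x. cmod (v$x) \<le> cmod (v$x0)" unfolding x0 by (rule Max_ge) (simp_all add: finite_imageI)
  have pos: "cmod (v$x0) > 0"
  proof (rule ccontr)
    assume "\<not> ?thesis"
    hence "\<And>x. v$x = 0" using mx by (metis norm_le_zero_iff order_trans not_less)
    hence "v = 0" by (simp add: Finite_Cartesian_Product.vec_eq_iff)
    with v0 show False by simp
  qed
  have "cmod z * cmod (v$x0) = cmod ((M *v v)$x0)" using ev by (simp add: norm_mult)
  also have "\<dots> = cmod (\<Sum>y\<in>UNIV. M$x0$y * v$y)" by (simp add: matrix_vector_mult_def)
  also have "\<dots> \<le> (\<Sum>y\<in>UNIV. cmod (M$x0$y) * cmod (v$y))"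
    by (rule order_trans[OF norm_sum]) (simp add: norm_mult)
  also have "\<dots> \<le> (\<Sum>y\<in>UNIV. cmod (M$x0$y) * cmod (v$x0))"
    by (rule sum_mono) (simp add: mult_left_mono mx)
  also have "\<dots> = (\<Sum>y\<in>UNIV. cmod (M$x0$y)) * cmod (v$x0)" by (simp add: sum_distrib_right)
  also have "\<dots> \<le> D * cmod (v$x0)" using rb pos by (simp add: mult_right_mono)
  finally show ?thesis using pos by simp
qed

lemma spectral:
  fixes M :: "complex^'n::finite^'n"
  assumes herm: "\<forall>x y. M$y$x = cnj (M$x$y)" and rb: "\<forall>x. (\<Sum>y\<in>UNIV. cmod (M$x$y)) \<le> D"
  shows "\<exists>b::'n \<Rightarrow> real. charpoly_mat M = (\<Prod>i\<in>UNIV. [:- complex_of_real (b i), 1:])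
     \<and> (\<forall>n. trace (mpow M n) = complex_of_real (\<Sum>i\<in>UNIV. b i ^ n)) \<and> (\<forall>i. \<bar>b i\<bar> \<le> D)"
proof -
  obtain P B Q :: "complex^'n^'n" where PQ: "P ** Q = Finite_Cartesian_Product.mat 1"
    and QP: "Q ** P = Finite_Cartesian_Product.mat 1" and M: "M = P ** B ** Q"
    and ut: "utri B" and rt: "\<forall>i. poly (char_poly (to_mat M)) (B $ i $ i) = 0"
    using schur_vec[of M] unfolding utri_def by blast
  have re: "\<And>i. B $ i $ i = complex_of_real (Re (B $ i $ i)) \<and> \<bar>Re (B $ i $ i)\<bar> \<le> D"
  proof -
    fix i
    obtain v where v: "v \<noteq> 0" "M *v v = (B $ i $ i) *s v" using eigvec_vec rt by blast
    have "Im (B $ i $ i) = 0" using herm_eig_real[OF herm v(2) v(1)] .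
    moreover have "cmod (B $ i $ i) \<le> D" using row_bound_eig[OF rb v(2) v(1)] .
    ultimately show "B $ i $ i = complex_of_real (Re (B $ i $ i)) \<and> \<bar>Re (B $ i $ i)\<bar> \<le> D"
      by (metis complex_is_Real_iff norm_of_real of_real_Re Reals_def complex_eq_iff)
  qed
  define b where "b i = Re (B $ i $ i)" for i
  have Bb: "\<And>i. B $ i $ i = complex_of_real (b i)" using re unfolding b_def by blast
  show ?thesis
  proof (intro exI[of _ b] conjI allI)
    show "charpoly_mat M = (\<Prod>i\<in>UNIV. [:- complex_of_real (b i), 1:])"
      using charpoly_sim[OF PQ QP M ut] Bb by simp
    fix n
    show "trace (mpow M n) = complex_of_real (\<Sum>i\<in>UNIV. b i ^ n)"
      using trace_sim[OF PQ QP M ut, of n] Bb by simp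
  next
    fix i show "\<bar>b i\<bar> \<le> D" using re unfolding b_def by blast
  qed
qed



lemma inner_idx_add: "inner_idx (a + b) k = inner_idx a k + inner_idx b k"
  unfolding inner_idx_def by (simp add: sum.distrib distrib_right)

lemma inner_idx_zero[simp]: "inner_idx 0 k = 0"
  unfolding inner_idx_def by simp

lemma inner_idx_neg: "inner_idx (- a) k = - inner_idx a k"
  unfolding inner_idx_def by (simp add: sum_negf)

lemma inner_idx_zero2[simp]: "inner_idx m 0 = 0"
  unfolding inner_idx_def by simp

fun walk :: "('e \<Rightarrow> 'v) \<Rightarrow> ('e \<Rightarrow> 'v) \<Rightarrow> 'v \<Rightarrow> 'v \<Rightarrow> 'e list \<Rightarrow> bool" where
  "walk s t x y [] = (x = y)"
| "walk s t x y (e # c) = (s e = x \<and> walk s t (t e) y c)"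

lemma walk_is_walk: "walk s t x y c = is_walk s t x y c"
proof (induct c arbitrary: x)
  case Nil
  then show ?case by (simp add: is_walk_def)
next
  case (Cons e c)
  show ?case
  proof (cases c)
    case Nil
    then show ?thesis by (auto simp: is_walk_def)
  next
    case (Cons e' c')
    have "is_walk s t x y (e # c) = (s e = x \<and> t (last c) = y \<and> t e = s (hd c) \<and>
        (\<forall>i < length c - 1. t (c ! i) = s (c ! (i + 1))))"
      unfolding is_walk_def using Cons
      by (auto simp: nth_Cons split: nat.splits)
    moreover have "is_walk s t (t e) y c = (s (hd c) = t e \<and> t (last c) = y \<and>
        (\<forall>i < length c - 1. t (c ! i) = s (c ! (i + 1))))"
      unfolding is_walk_def using Cons by auto
    ultimately show ?thesis using Cons.hyps by auto
  qed
qed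

lemma cycle_walk:
  assumes "c \<noteq> []"
  shows "is_cycle s t c = is_walk s t (s (hd c)) (s (hd c)) c"
proof -
  let ?n = "length c"
  have n: "?n > 0" using assms by simp
  have "is_cycle s t c = (\<forall>i < ?n. t (c ! i) = s (c ! ((i + 1) mod ?n)))"
    unfolding is_cycle_def using assms by simp
  also have "\<dots> = ((\<forall>i < ?n - 1. t (c ! i) = s (c ! (i + 1))) \<and> t (c ! (?n - 1)) = s (c ! 0))"
  proof (intro iffI conjI allI impI)
    fix i assume H: "\<forall>i < ?n. t (c ! i) = s (c ! ((i + 1) mod ?n))" and i: "i < ?n - 1"
    hence "(i + 1) mod ?n = i + 1" by simp
    thus "t (c ! i) = s (c ! (i + 1))" using H i by (metis less_diff_conv less_imp_add_positive trans_less_add1 add_lessD1)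
  next
    assume H: "\<forall>i < ?n. t (c ! i) = s (c ! ((i + 1) mod ?n))"
    have m: "(?n - 1 + 1) mod ?n = 0" using n by simp
    have "?n - 1 < ?n" using n by simp
    from H[rule_format, OF this] m show "t (c ! (?n - 1)) = s (c ! 0)" by simp
  next
    fix i assume H: "(\<forall>i < ?n - 1. t (c ! i) = s (c ! (i + 1))) \<and> t (c ! (?n - 1)) = s (c ! 0)"
      and i: "i < ?n"
    show "t (c ! i) = s (c ! ((i + 1) mod ?n))"
    proof (cases "i < ?n - 1")
      case True
      then show ?thesis using H by simp
    next
      case False
      hence "i = ?n - 1" using i by simp
      moreover have "(?n - 1 + 1) mod ?n = 0" using n by simp
      ultimately show ?thesis using H by simp
    qed
  qed
  also have "\<dots> = is_walk s t (s (hd c)) (s (hd c)) c"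
    unfolding is_walk_def using assms by (auto simp: hd_conv_nth last_conv_nth)
  finally show ?thesis .
qed

lemma sum_lists_Suc:
  "(\<Sum>c\<in>{c::'e::finite list. length c = Suc n}. g c) = (\<Sum>e\<in>UNIV. \<Sum>c\<in>{c. length c = n}. g (e # c))"
proof -
  have eq: "{c::'e list. length c = Suc n} = (\<lambda>(e, c). e # c) ` (UNIV \<times> {c. length c = n})"
    by (auto simp: length_Suc_conv image_iff)
  have inj: "inj_on (\<lambda>(e, c). e # c) (UNIV \<times> {c::'e list. length c = n})"
    by (auto simp: inj_on_def)
  have "(\<Sum>c\<in>{c::'e::finite list. length c = Suc n}. g c) = (\<Sum>(e, c)\<in>UNIV \<times> {c. length c = n}. g (e # c))"
    unfolding eq by (subst sum.reindex[OF inj]) (simp add: case_prod_beta comp_def)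
  also have "\<dots> = (\<Sum>e\<in>UNIV. \<Sum>c\<in>{c. length c = n}. g (e # c))"
    by (rule sum.cartesian_product[symmetric])
  finally show ?thesis .
qed

lemma mpow_walks:
  fixes s t :: "'e::finite \<Rightarrow> 'v::finite" and w :: "'e \<Rightarrow> complex"
  assumes M: "\<And>x y. M $ x $ y = (\<Sum>e\<in>UNIV. if s e = x \<and> t e = y then w e else 0)"
  shows "mpow M n $ x $ y = (\<Sum>c\<in>{c. length c = n}. if walk s t x y c then prod_list (map w c) else 0)"
proof (induct n arbitrary: x)
  case 0
  have "{c::'e list. length c = 0} = {[]}" by auto
  then show ?case by (simp add: Finite_Cartesian_Product.mat_def)
next
  case (Suc n)
  have "mpow M (Suc n) $ x $ y = (\<Sum>z\<in>UNIV. M $ x $ z * mpow M n $ z $ y)"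
    by (simp add: matrix_matrix_mult_def)
  also have "\<dots> = (\<Sum>z\<in>UNIV. \<Sum>e\<in>UNIV. (if s e = x \<and> t e = z then w e else 0) * mpow M n $ z $ y)"
    by (simp add: M sum_distrib_right)
  also have "\<dots> = (\<Sum>e\<in>UNIV. \<Sum>z\<in>UNIV. (if s e = x \<and> t e = z then w e else 0) * mpow M n $ z $ y)"
    by (rule sum.swap)
  also have "\<dots> = (\<Sum>e\<in>UNIV. (if s e = x then w e * mpow M n $ t e $ y else 0))"
  proof (rule sum.cong[OF refl])
    fix e
    have "(\<Sum>z\<in>UNIV. (if s e = x \<and> t e = z then w e else 0) * mpow M n $ z $ y)
        = (\<Sum>z\<in>UNIV. if z = t e then (if s e = x then w e * mpow M n $ z $ y else 0) else 0)"
      by (rule sum.cong) auto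
    also have "\<dots> = (if s e = x then w e * mpow M n $ t e $ y else 0)"
      by (simp add: sum.delta)
    finally show "(\<Sum>z\<in>UNIV. (if s e = x \<and> t e = z then w e else 0) * mpow M n $ z $ y)
        = (if s e = x then w e * mpow M n $ t e $ y else 0)" .
  qed
  also have "\<dots> = (\<Sum>e\<in>UNIV. \<Sum>c\<in>{c. length c = n}. if walk s t x y (e # c) then prod_list (map w (e # c)) else 0)"
    by (rule sum.cong[OF refl]) (simp add: Suc sum_distrib_left if_distrib cong: if_cong)
  also have "\<dots> = (\<Sum>c\<in>{c. length c = Suc n}. if walk s t x y c then prod_list (map w c) else 0)"
    by (rule sum_lists_Suc[symmetric])
  finally show ?case .
qed

lemma trace_cycles:
  fixes s t :: "'e::finite \<Rightarrow> 'v::finite" and w :: "'e \<Rightarrow> complex"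
  assumes M: "\<And>x y. M $ x $ y = (\<Sum>e\<in>UNIV. if s e = x \<and> t e = y then w e else 0)"
    and n: "n \<ge> 1"
  shows "trace (mpow M n) = (\<Sum>c\<in>{c. length c = n \<and> is_cycle s t c}. prod_list (map w c))"
proof -
  have "trace (mpow M n) = (\<Sum>x\<in>UNIV. \<Sum>c\<in>{c. length c = n}. if walk s t x x c then prod_list (map w c) else 0)"
    by (simp add: trace_def mpow_walks[OF M])
  also have "\<dots> = (\<Sum>c\<in>{c. length c = n}. \<Sum>x\<in>UNIV. if walk s t x x c then prod_list (map w c) else 0)"
    by (rule sum.swap)
  also have "\<dots> = (\<Sum>c\<in>{c. length c = n}. if is_cycle s t c then prod_list (map w c) else 0)"
  proof (rule sum.cong[OF refl])
    fix c :: "'e list" assume "c \<in> {c. length c = n}"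
    hence c: "c \<noteq> []" using n by auto
    have "(\<Sum>x\<in>UNIV. if walk s t x x c then prod_list (map w c) else 0)
       = (\<Sum>x\<in>UNIV. if x = s (hd c) then (if is_cycle s t c then prod_list (map w c) else 0) else 0)"
    proof (rule sum.cong[OF refl])
      fix x
      have h1: "walk s t x x c \<Longrightarrow> x = s (hd c)" using c by (cases c) auto
      have h2: "walk s t (s (hd c)) (s (hd c)) c = is_cycle s t c"
        using cycle_walk[OF c, of s t] walk_is_walk[of s t] by simp
      show "(if walk s t x x c then prod_list (map w c) else 0) =
            (if x = s (hd c) then (if is_cycle s t c then prod_list (map w c) else 0) else 0)"
      proof (cases "x = s (hd c)")
        case True
        then show ?thesis using h2 by simp
      next
        case False
        then show ?thesis using h1 by auto
      qed
    qed
    also have "\<dots> = (if is_cycle s t c then prod_list (map w c) else 0)"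
      by (simp add: sum.delta')
    finally show "(\<Sum>x\<in>UNIV. if walk s t x x c then prod_list (map w c) else 0)
       = (if is_cycle s t c then prod_list (map w c) else 0)" .
  qed
  also have "\<dots> = (\<Sum>c\<in>{c. length c = n \<and> is_cycle s t c}. prod_list (map w c))"
  proof -
    have fin: "finite {c::'e list. length c = n}"
      using finite_lists_length_eq[of "UNIV::'e set" n] by simp
    have e: "{c \<in> {c. length c = n}. is_cycle s t c} = {c. length c = n \<and> is_cycle s t c}" by auto
    have "(\<Sum>c\<in>{c. length c = n}. if is_cycle s t c then prod_list (map w c) else 0)
        = (\<Sum>c\<in>{c \<in> {c. length c = n}. is_cycle s t c}. prod_list (map w c))"
      by (rule sum.inter_filter[OF fin, symmetric])
    then show ?thesis unfolding e .
  qed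
  finally show ?thesis .
qed

lemma prod_cis_walk:
  "prod_list (map (\<lambda>e. cis (\<alpha> e + inner_idx (\<tau> e) k)) c) = cis (flux \<alpha> c + inner_idx (walk_index \<tau> c) k)"
proof (induct c)
  case Nil
  then show ?case by (simp add: flux_def walk_index_def)
next
  case (Cons e c)
  have "prod_list (map (\<lambda>e. cis (\<alpha> e + inner_idx (\<tau> e) k)) (e # c))
     = cis (\<alpha> e + inner_idx (\<tau> e) k) * cis (flux \<alpha> c + inner_idx (walk_index \<tau> c) k)"
    using Cons by simp
  also have "\<dots> = cis ((\<alpha> e + inner_idx (\<tau> e) k) + (flux \<alpha> c + inner_idx (walk_index \<tau> c) k))"
    by (rule cis_mult)
  also have "(\<alpha> e + inner_idx (\<tau> e) k) + (flux \<alpha> c + inner_idx (walk_index \<tau> c) k)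
      = flux \<alpha> (e # c) + inner_idx (walk_index \<tau> (e # c)) k"
    by (simp add: flux_def walk_index_def inner_idx_add algebra_simps)
  finally show ?case .
qed



lemma fiber_entry:
  "fiber_matrix src tgt \<alpha> \<tau> k $ x $ y =
     (\<Sum>e\<in>UNIV. if src e = x \<and> tgt e = y then cis (\<alpha> e + inner_idx (\<tau> e) k) else 0)"
  unfolding fiber_matrix_def by (simp add: sum.inter_filter[symmetric])

lemma fiber_trace:
  fixes src tgt :: "'e::finite \<Rightarrow> 'v::finite"
  assumes "n \<ge> 1"
  shows "trace (mpow (fiber_matrix src tgt \<alpha> \<tau> k) n) =
    (\<Sum>c\<in>{c. length c = n \<and> is_cycle src tgt c}. cis (flux \<alpha> c + inner_idx (walk_index \<tau> c) k))"
  using trace_cycles[OF fiber_entry assms, of src tgt \<alpha> \<tau> k] by (simp add: prod_cis_walk)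

lemma fiber_herm:
  fixes src tgt :: "'e::finite \<Rightarrow> 'v::finite" and inv :: "'e \<Rightarrow> 'e"
  assumes inv_inv: "\<And>e. inv (inv e) = e"
    and src_inv: "\<And>e. src (inv e) = tgt e"
    and tgt_inv: "\<And>e. tgt (inv e) = src e"
    and tau_inv: "\<And>e. \<tau> (inv e) = - \<tau> e"
    and alpha_inv: "\<And>e. \<alpha> (inv e) = - \<alpha> e"
  shows "\<forall>x y. fiber_matrix src tgt \<alpha> \<tau> k $ y $ x = cnj (fiber_matrix src tgt \<alpha> \<tau> k $ x $ y)"
proof (intro allI)
  fix x y
  have "fiber_matrix src tgt \<alpha> \<tau> k $ y $ x =
     (\<Sum>e\<in>{e. src e = y \<and> tgt e = x}. cis (\<alpha> e + inner_idx (\<tau> e) k))"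
    unfolding fiber_matrix_def by simp
  also have "\<dots> = (\<Sum>e\<in>{e. src e = x \<and> tgt e = y}. cis (\<alpha> (inv e) + inner_idx (\<tau> (inv e)) k))"
    by (rule sum.reindex_bij_witness[of _ inv inv]) (auto simp: inv_inv src_inv tgt_inv)
  also have "\<dots> = (\<Sum>e\<in>{e. src e = x \<and> tgt e = y}. cnj (cis (\<alpha> e + inner_idx (\<tau> e) k)))"
    by (rule sum.cong[OF refl]) (simp add: tau_inv alpha_inv inner_idx_neg cis_cnj)
  also have "\<dots> = cnj (fiber_matrix src tgt \<alpha> \<tau> k $ x $ y)"
    unfolding fiber_matrix_def by (simp add: cnj_sum)
  finally show "fiber_matrix src tgt \<alpha> \<tau> k $ y $ x = cnj (fiber_matrix src tgt \<alpha> \<tau> k $ x $ y)" .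
qed

lemma degree_le_max: "degree_at src x \<le> max_degree (src :: 'e::finite \<Rightarrow> 'v::finite)"
  unfolding max_degree_def by (rule Max_ge) (simp_all add: finite_imageI)

lemma fiber_rb:
  fixes src tgt :: "'e::finite \<Rightarrow> 'v::finite"
  shows "\<forall>x. (\<Sum>y\<in>UNIV. cmod (fiber_matrix src tgt \<alpha> \<tau> k $ x $ y)) \<le> real (max_degree src)"
proof
  fix x
  have "\<And>y. cmod (fiber_matrix src tgt \<alpha> \<tau> k $ x $ y) \<le> real (card {e. src e = x \<and> tgt e = y})"
  proof -
    fix y
    have "cmod (fiber_matrix src tgt \<alpha> \<tau> k $ x $ y) \<le> (\<Sum>e\<in>{e. src e = x \<and> tgt e = y}. cmod (cis (\<alpha> e + inner_idx (\<tau> e) k)))"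
      unfolding fiber_matrix_def vec_lambda_beta by (rule norm_sum)
    thus "cmod (fiber_matrix src tgt \<alpha> \<tau> k $ x $ y) \<le> real (card {e. src e = x \<and> tgt e = y})"
      by simp
  qed
  hence "(\<Sum>y\<in>UNIV. cmod (fiber_matrix src tgt \<alpha> \<tau> k $ x $ y)) \<le> (\<Sum>y\<in>UNIV. real (card {e. src e = x \<and> tgt e = y}))"
    by (rule sum_mono)
  also have "\<dots> = real (\<Sum>y\<in>UNIV. card {e. src e = x \<and> tgt e = y})" by simp
  also have "(\<Sum>y\<in>UNIV. card {e. src e = x \<and> tgt e = y}) = card {e. src e = x}"
  proof -
    have "(\<Sum>y\<in>UNIV. card {e. src e = x \<and> tgt e = y}) = (\<Sum>y\<in>UNIV. \<Sum>e\<in>{e' \<in> {e. src e = x}. tgt e' = y}. (1::nat))"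
      by (rule sum.cong) auto
    also have "\<dots> = (\<Sum>e\<in>{e. src e = x}. (1::nat))"
      by (rule sum.group) auto
    finally show ?thesis by simp
  qed
  also have "\<dots> = degree_at src x" unfolding degree_at_def ..
  also have "real (degree_at src x) \<le> real (max_degree src)" using degree_le_max by simp
  finally show "(\<Sum>y\<in>UNIV. cmod (fiber_matrix src tgt \<alpha> \<tau> k $ x $ y)) \<le> real (max_degree src)" .
qed

lemma proots_lin_prod:
  "proots (\<Prod>i\<in>(UNIV::'n::finite set). [:- c i, 1:]) = image_mset c (mset_set UNIV)"
proof -
  have "\<And>A. finite (A::'n set) \<Longrightarrow> proots (\<Prod>i\<in>A. [:- c i, 1:]) = image_mset c (mset_set A)"
  proof -
    fix A :: "'n set" assume "finite A"
    thus "proots (\<Prod>i\<in>A. [:- c i, 1:]) = image_mset c (mset_set A)"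
    proof (induct A rule: finite_induct)
      case empty
      then show ?case by simp
    next
      case (insert x F)
      have nz: "(\<Prod>i\<in>F. [:- c i, 1:]) \<noteq> 0" by (simp add: insert.hyps(1))
      have "proots (\<Prod>i\<in>insert x F. [:- c i, 1:]) = proots ([:- c x, 1:] * (\<Prod>i\<in>F. [:- c i, 1:]))"
        using insert by simp
      also have "\<dots> = proots [:- c x, 1:] + proots (\<Prod>i\<in>F. [:- c i, 1:])"
        by (rule proots_mult) (simp_all add: nz)
      also have "\<dots> = image_mset c (mset_set (insert x F))"
        using insert by (simp add: proots_linear_factor)
      finally show ?case .
    qed
  qed
  thus ?thesis by simp
qed

lemma eig_sorted:
  fixes M :: "complex^'n::finite^'n" and b :: "'n \<Rightarrow> real"
  assumes "charpoly_mat M = (\<Prod>i\<in>UNIV. [:- complex_of_real (b i), 1:])"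
  shows "eigenvalues_sorted M = sorted_list_of_multiset (image_mset b (mset_set UNIV))"
  unfolding eigenvalues_sorted_def assms proots_lin_prod by (simp add: multiset.map_comp comp_def)

lemma sorted_facts:
  fixes b :: "'n::finite \<Rightarrow> real"
  defines "xs \<equiv> sorted_list_of_multiset (image_mset b (mset_set UNIV))"
  shows "length xs = CARD('n)" "set xs = range b"
    "(\<Sum>j<CARD('n). (xs ! j) ^ n) = (\<Sum>i\<in>UNIV. b i ^ n)"
proof -
  have m: "mset xs = image_mset b (mset_set UNIV)" unfolding xs_def by simp
  show l: "length xs = CARD('n)" using arg_cong[OF m, of size] by simp
  show "set xs = range b" using arg_cong[OF m, of set_mset] by simp
  have "(\<Sum>j<CARD('n). (xs ! j) ^ n) = sum_list (map (\<lambda>x. x ^ n) xs)"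
    using l by (simp add: sum_list_sum_nth atLeast0LessThan)
  also have "\<dots> = sum_mset (image_mset (\<lambda>x. x ^ n) (mset xs))"
    by (metis mset_map sum_mset_sum_list)
  also have "\<dots> = (\<Sum>i\<in>UNIV. b i ^ n)"
    unfolding m by (simp add: multiset.map_comp comp_def sum_unfold_sum_mset)
  finally show "(\<Sum>j<CARD('n). (xs ! j) ^ n) = (\<Sum>i\<in>UNIV. b i ^ n)" .
qed



lemma poly_tendsto_fixed:
  fixes q :: "'a \<Rightarrow> complex poly"
  assumes deg: "\<forall>x. degree (q x) \<le> N" "degree p \<le> N"
    and c: "\<forall>i. ((\<lambda>x. coeff (q x) i) \<longlongrightarrow> coeff p i) F"
  shows "((\<lambda>x. poly (q x) z) \<longlongrightarrow> poly p z) F"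
proof -
  have e: "poly r z = (\<Sum>i\<le>N. coeff r i * z ^ i)" if "degree r \<le> N" for r :: "complex poly"
    unfolding poly_altdef using that by (intro sum.mono_neutral_left) (auto simp: coeff_eq_0)
  have "((\<lambda>x. \<Sum>i\<le>N. coeff (q x) i * z ^ i) \<longlongrightarrow> (\<Sum>i\<le>N. coeff p i * z ^ i)) F"
    by (intro tendsto_intros c[rule_format])
  thus ?thesis using e deg by simp
qed

lemma sdiv_rec: "coeff (synthetic_div P c) n = coeff P (Suc n) + c * coeff (synthetic_div P c) (Suc n)"
proof -
  have "coeff (P + Polynomial.smult c (synthetic_div P c)) (Suc n) = coeff (pCons (poly P c) (synthetic_div P c)) (Suc n)"
    by (simp only: synthetic_div_correct)
  thus ?thesis by simp
qed

lemma sdiv_zero: "degree P \<le> n \<Longrightarrow> coeff (synthetic_div P c) n = 0"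
proof (cases "degree P = 0")
  case True
  then show ?thesis by (simp add: synthetic_div_eq_0_iff[THEN iffD2])
next
  case False
  assume "degree P \<le> n"
  with False have "degree (synthetic_div P c) < n" by (simp add: degree_synthetic_div)
  then show ?thesis by (simp add: coeff_eq_0)
qed

lemma sdiv_tendsto:
  fixes q :: "'a \<Rightarrow> complex poly"
  assumes deg: "\<forall>x. degree (q x) = d" "degree p = d"
    and c: "\<forall>i. ((\<lambda>x. coeff (q x) i) \<longlongrightarrow> coeff p i) F" and w: "(w \<longlongrightarrow> r) F"
  shows "((\<lambda>x. coeff (synthetic_div (q x) (w x)) n) \<longlongrightarrow> coeff (synthetic_div p r) n) F"
proof -
  have "\<forall>n. d \<le> n + j \<longrightarrow> ((\<lambda>x. coeff (synthetic_div (q x) (w x)) n) \<longlongrightarrow> coeff (synthetic_div p r) n) F" for j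
  proof (induct j)
    case 0
    show ?case
    proof (intro allI impI)
      fix n assume "d \<le> n + 0"
      hence "\<And>x. coeff (synthetic_div (q x) (w x)) n = 0" "coeff (synthetic_div p r) n = 0"
        using deg by (auto intro: sdiv_zero)
      thus "((\<lambda>x. coeff (synthetic_div (q x) (w x)) n) \<longlongrightarrow> coeff (synthetic_div p r) n) F" by simp
    qed
  next
    case (Suc j)
    show ?case
    proof (intro allI impI)
      fix n assume "d \<le> n + Suc j"
      hence "d \<le> Suc n + j" by simp
      with Suc have IH: "((\<lambda>x. coeff (synthetic_div (q x) (w x)) (Suc n)) \<longlongrightarrow> coeff (synthetic_div p r) (Suc n)) F"
        by blast
      have "((\<lambda>x. coeff (q x) (Suc n) + w x * coeff (synthetic_div (q x) (w x)) (Suc n))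
          \<longlongrightarrow> coeff p (Suc n) + r * coeff (synthetic_div p r) (Suc n)) F"
        by (intro tendsto_intros c[rule_format] w IH)
      thus "((\<lambda>x. coeff (synthetic_div (q x) (w x)) n) \<longlongrightarrow> coeff (synthetic_div p r) n) F"
        by (simp add: sdiv_rec[symmetric])
    qed
  qed
  from this[of d] show ?thesis by simp
qed

lemma prod_mset_lower:
  fixes r c :: complex
  assumes "\<forall>y\<in>#R. e \<le> cmod (r - y)" "0 \<le> e"
  shows "e ^ size R \<le> cmod (\<Prod>y\<in>#R. (r - y))"
  using assms
proof (induct R)
  case empty
  then show ?case by simp
next
  case (add x R)
  have "e ^ size (add_mset x R) = e * e ^ size R" by simp
  also have "\<dots> \<le> cmod (r - x) * cmod (\<Prod>y\<in>#R. (r - y))"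
    using add by (intro mult_mono) auto
  also have "\<dots> = cmod (\<Prod>y\<in>#add_mset x R. (r - y))" by (simp add: norm_mult)
  finally show ?case .
qed

lemma poly_prod_lin_mset: "poly (\<Prod>y\<in>#R. [:- y, 1:]) r = (\<Prod>y\<in>#R. (r - (y::complex)))"
  by (induct R) (simp_all add: algebra_simps)

lemma monic_decomp:
  fixes q :: "complex poly"
  assumes "lead_coeff q = 1"
  shows "q = (\<Prod>y\<in>#proots q. [:- y, 1:])"
  using complex_poly_decompose_multiset[of q] assms by simp

lemma roots_cont:
  fixes q :: "'a \<Rightarrow> complex poly" and p :: "complex poly"
  assumes "lead_coeff p = 1" "\<forall>x. degree (q x) = degree p \<and> lead_coeff (q x) = 1"
    "\<forall>i. ((\<lambda>x. coeff (q x) i) \<longlongrightarrow> coeff p i) F" "\<epsilon> > 0"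
  shows "eventually (\<lambda>x. rel_mset (\<lambda>a b. cmod (a - b) \<le> \<epsilon>) (proots p) (proots (q x))) F"
  using assms
proof (induct "degree p" arbitrary: p q)
  case 0
  have "proots p = {#}" using size_proots_complex[of p] 0 by simp
  moreover have "\<And>x. proots (q x) = {#}" using size_proots_complex 0 by (metis size_eq_0_iff_empty)
  ultimately show ?case by simp
next
  case (Suc m p q)
  have "proots p \<noteq> {#}" using size_proots_complex[of p] Suc.hyps(2) by auto
  then obtain r where r: "r \<in># proots p" by blast
  have p0: "p \<noteq> 0" using Suc.prems(1) by auto
  have pr: "poly p r = 0" using r p0 by simp
  define p' where "p' = synthetic_div p r"
  have pp: "p = [:-r,1:] * p'" using synthetic_div_correct'[of r p] pr by (simp add: p'_def)
  have dp': "m = degree p'" using degree_synthetic_div[of p r] Suc.hyps(2) by (simp add: p'_def)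
  have lp': "lead_coeff p' = 1" using Suc.prems(1) pp by (metis lead_coeff_mult lead_coeff_pCons(1) mult_1 one_neq_zero pCons_one)
  have lq: "lead_coeff (q x) = 1" for x
  proof -
    from Suc.prems(2) have "degree (q x) = degree p \<and> lead_coeff (q x) = 1" by (rule spec)
    thus ?thesis by auto
  qed
  have q0: "q x \<noteq> 0" for x using lq[of x] by auto
  have dq: "\<And>x. degree (q x) = Suc m" using Suc.prems(2) Suc.hyps(2) by simp
  have qne: "\<And>x. set_mset (proots (q x)) \<noteq> {}"
    using size_proots_complex dq by (metis Zero_not_Suc set_mset_eq_empty_iff size_empty)
  define w where "w x = arg_min_on (\<lambda>y. cmod (r - y)) (set_mset (proots (q x)))" for x
  have wq: "w x \<in># proots (q x)" for x
    unfolding w_def using arg_min_if_finite(1)[OF finite_set_mset qne] by blast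
  have wmin: "\<forall>y\<in>#proots (q x). cmod (r - w x) \<le> cmod (r - y)" for x
    unfolding w_def using arg_min_if_finite(2)[OF finite_set_mset qne, of x "\<lambda>y. cmod (r - y)"]
    by (auto simp: not_less)
  have bound: "cmod (r - w x) ^ Suc m \<le> cmod (poly (q x) r)" for x
  proof -
    have "poly (q x) r = poly (\<Prod>y\<in>#proots (q x). [:- y, 1:]) r"
      using arg_cong[OF monic_decomp[OF lq[of x]], of "\<lambda>p. poly p r"] .
    hence "poly (q x) r = (\<Prod>y\<in>#proots (q x). (r - y))" by (simp only: poly_prod_lin_mset)
    moreover have "size (proots (q x)) = Suc m" using size_proots_complex dq by simp
    ultimately show ?thesis using prod_mset_lower[OF wmin[of x], of] by (metis norm_ge_zero)
  qed
  have ptend: "((\<lambda>x. poly (q x) r) \<longlongrightarrow> 0) F"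
    using poly_tendsto_fixed[of q "degree p" p F r] Suc.prems(2,3) pr by simp
  have wlim: "(w \<longlongrightarrow> r) F"
  proof (rule tendstoI)
    fix e :: real assume e: "e > 0"
    hence "e ^ Suc m > 0" by simp
    from tendstoD[OF ptend this] have "eventually (\<lambda>x. cmod (poly (q x) r) < e ^ Suc m) F" by simp
    thus "eventually (\<lambda>x. dist (w x) r < e) F"
    proof (rule eventually_mono)
      fix x assume "cmod (poly (q x) r) < e ^ Suc m"
      with bound[of x] have "cmod (r - w x) ^ Suc m < e ^ Suc m" by linarith
      hence "cmod (r - w x) < e" using e by (meson le_less power_less_imp_less_base)
      thus "dist (w x) r < e" by (simp add: dist_norm norm_minus_commute)
    qed
  qed
  define q' where "q' x = synthetic_div (q x) (w x)" for x
  have qq: "q x = [:-w x,1:] * q' x" for x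
    using synthetic_div_correct'[of "w x" "q x"] wq[of x] q0[of x] by (simp add: q'_def)
  have dq': "degree (q' x) = degree p' \<and> lead_coeff (q' x) = 1" for x
  proof
    show "degree (q' x) = degree p'" using degree_synthetic_div[of "q x" "w x"] dq dp' by (simp add: q'_def)
    show "lead_coeff (q' x) = 1" using Suc.prems(2) qq[of x]
      by (metis lead_coeff_mult lead_coeff_pCons(1) mult_1 one_neq_zero pCons_one)
  qed
  have cq': "\<forall>i. ((\<lambda>x. coeff (q' x) i) \<longlongrightarrow> coeff p' i) F"
  proof
    fix i
    have d1: "\<forall>x. degree (q x) = Suc m" using dq by blast
    have d2: "degree p = Suc m" using Suc.hyps(2) by simp
    show "((\<lambda>x. coeff (q' x) i) \<longlongrightarrow> coeff p' i) F"
      unfolding q'_def p'_def by (rule sdiv_tendsto[OF d1 d2 Suc.prems(3) wlim])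
  qed
  have dq'': "\<forall>x. degree (q' x) = degree p' \<and> lead_coeff (q' x) = 1" using dq' by blast
  have IH: "eventually (\<lambda>x. rel_mset (\<lambda>a b. cmod (a - b) \<le> \<epsilon>) (proots p') (proots (q' x))) F"
    by (rule Suc.hyps(1)[OF dp' lp' dq'' cq' Suc.prems(4)])
  have p'0: "p' \<noteq> 0" using lp' by auto
  have pp': "proots p = add_mset r (proots p')"
  proof -
    have "proots p = proots [:-r,1:] + proots p'" unfolding pp by (rule proots_mult) (simp_all add: p'0)
    thus ?thesis by (simp add: proots_linear_factor)
  qed
  have qq': "proots (q x) = add_mset (w x) (proots (q' x))" for x
  proof -
    have "q' x \<noteq> 0" using dq'[of x] by auto
    hence "proots (q x) = proots [:-w x,1:] + proots (q' x)" unfolding qq[of x] by (intro proots_mult) simp_all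
    thus ?thesis by (simp add: proots_linear_factor)
  qed
  have ew: "eventually (\<lambda>x. cmod (r - w x) \<le> \<epsilon>) F"
    using tendstoD[OF wlim Suc.prems(4)] by (rule eventually_mono) (simp add: dist_norm norm_minus_commute)
  show ?case
    using eventually_conj[OF IH ew]
  proof (rule eventually_mono)
    fix x assume H: "rel_mset (\<lambda>a b. cmod (a - b) \<le> \<epsilon>) (proots p') (proots (q' x)) \<and> cmod (r - w x) \<le> \<epsilon>"
    hence "rel_mset (\<lambda>a b. cmod (a - b) \<le> \<epsilon>) (add_mset r (proots p')) (add_mset (w x) (proots (q' x)))"
      by (intro rel_mset_Plus) auto
    thus "rel_mset (\<lambda>a b. cmod (a - b) \<le> \<epsilon>) (proots p) (proots (q x))"
      unfolding pp' qq' .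
  qed
qed



lemma rel_mset_count:
  assumes "rel_mset R X Y" "\<And>a b. R a b \<Longrightarrow> P a \<Longrightarrow> Q b"
  shows "size (filter_mset P X) \<le> size (filter_mset Q Y)"
proof -
  from assms(1) obtain xs ys where xy: "mset xs = X" "mset ys = Y" "list_all2 R xs ys"
    unfolding rel_mset_def by blast
  have "length (filter P xs) \<le> length (filter Q ys)" using xy(3)
    by (induct rule: list_all2_induct) (auto dest: assms(2))
  thus ?thesis using xy(1,2) by (metis mset_filter size_mset)
qed

lemma sorted_le_count:
  fixes xs :: "real list"
  assumes "sorted xs" "j < length xs"
  shows "j < length (filter (\<lambda>a. a \<le> xs ! j) xs)"
proof -
  have "{..j} \<subseteq> {i. i < length xs \<and> xs ! i \<le> xs ! j}"
    using assms by (auto simp: sorted_iff_nth_mono)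
  hence "card {..j} \<le> card {i. i < length xs \<and> xs ! i \<le> xs ! j}" by (rule card_mono[rotated]) simp
  thus ?thesis by (simp add: length_filter_conv_card)
qed

lemma count_le_sorted:
  fixes ys :: "real list"
  assumes "sorted ys" "j < length (filter (\<lambda>a. a \<le> c) ys)"
  shows "ys ! j \<le> c"
proof (rule ccontr)
  assume H: "\<not> ys ! j \<le> c"
  have "{i. i < length ys \<and> ys ! i \<le> c} \<subseteq> {..<j}"
  proof
    fix i assume i: "i \<in> {i. i < length ys \<and> ys ! i \<le> c}"
    show "i \<in> {..<j}"
    proof (rule ccontr)
      assume "i \<notin> {..<j}"
      hence "j \<le> i" by simp
      hence "ys ! j \<le> ys ! i" using assms(1) i by (simp add: sorted_iff_nth_mono)
      with H i show False by simp
    qed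
  qed
  hence "card {i. i < length ys \<and> ys ! i \<le> c} \<le> card {..<j}" by (rule card_mono[rotated]) simp
  with assms(2) show False by (simp add: length_filter_conv_card)
qed

lemma sorted_shift:
  fixes X Y :: "real multiset"
  assumes R: "rel_mset (\<lambda>a b. \<bar>a - b\<bar> \<le> e) X Y" and j: "j < size X"
  shows "sorted_list_of_multiset Y ! j \<le> sorted_list_of_multiset X ! j + e"
proof -
  define xs where "xs = sorted_list_of_multiset X"
  define ys where "ys = sorted_list_of_multiset Y"
  have mx: "mset xs = X" and my: "mset ys = Y" unfolding xs_def ys_def by simp_all
  have sx: "sorted xs" and sy: "sorted ys" unfolding xs_def ys_def by simp_all
  have jx: "j < length xs" using j mx by auto
  let ?c = "xs ! j"
  have "j < length (filter (\<lambda>a. a \<le> ?c) xs)" by (rule sorted_le_count[OF sx jx])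
  also have "length (filter (\<lambda>a. a \<le> ?c) xs) = size (filter_mset (\<lambda>a. a \<le> ?c) X)"
    by (metis mx mset_filter size_mset)
  also have "\<dots> \<le> size (filter_mset (\<lambda>a. a \<le> ?c + e) Y)"
    by (rule rel_mset_count[OF R]) auto
  also have "\<dots> = length (filter (\<lambda>a. a \<le> ?c + e) ys)"
    by (metis my mset_filter size_mset)
  finally have "j < length (filter (\<lambda>a. a \<le> ?c + e) ys)" .
  from count_le_sorted[OF sy this] show ?thesis unfolding xs_def ys_def .
qed

lemma sorted_close:
  fixes X Y :: "real multiset"
  assumes R: "rel_mset (\<lambda>a b. \<bar>a - b\<bar> \<le> e) X Y" and j: "j < size X"
  shows "\<bar>sorted_list_of_multiset X ! j - sorted_list_of_multiset Y ! j\<bar> \<le> e"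
proof -
  have R': "rel_mset (\<lambda>a b. \<bar>a - b\<bar> \<le> e) Y X"
  proof -
    have "rel_mset (\<lambda>a b. \<bar>a - b\<bar> \<le> e)\<inverse>\<inverse> Y X" using R by (simp add: multiset.rel_flip)
    moreover have "(\<lambda>a b. \<bar>a - b\<bar> \<le> e)\<inverse>\<inverse> = (\<lambda>a b. \<bar>a - b\<bar> \<le> (e::real))"
      by (auto simp: fun_eq_iff abs_minus_commute)
    ultimately show ?thesis by simp
  qed
  have "size X = size Y" using R by (rule rel_mset_size)
  hence j': "j < size Y" using j by simp
  show ?thesis using sorted_shift[OF R j] sorted_shift[OF R' j'] by linarith
qed

lemma coeff_prod_tendsto:
  fixes f :: "'a \<Rightarrow> 'i \<Rightarrow> complex poly"
  assumes "finite A" "\<forall>i\<in>A. \<forall>n. ((\<lambda>x. coeff (f x i) n) \<longlongrightarrow> coeff (f0 i) n) F"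
  shows "((\<lambda>x. coeff (\<Prod>i\<in>A. f x i) n) \<longlongrightarrow> coeff (\<Prod>i\<in>A. f0 i) n) F"
  using assms
proof (induct A arbitrary: n rule: finite_induct)
  case empty
  then show ?case by simp
next
  case (insert a A)
  have "((\<lambda>x. \<Sum>i\<le>n. coeff (f x a) i * coeff (\<Prod>i\<in>A. f x i) (n - i))
     \<longlongrightarrow> (\<Sum>i\<le>n. coeff (f0 a) i * coeff (\<Prod>i\<in>A. f0 i) (n - i))) F"
    using insert by (intro tendsto_intros) auto
  thus ?case using insert by (simp add: coeff_mult)
qed

lemma coeff_sign_mult: "coeff (of_int (sign p) * P) n = of_int (sign p) * coeff (P::complex poly) n"
  by (simp add: sign_def)

lemma charpoly_coeff_tendsto:
  fixes M :: "'a \<Rightarrow> complex^'n::finite^'n"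
  assumes "\<forall>i j. ((\<lambda>x. M x $ i $ j) \<longlongrightarrow> M0 $ i $ j) F"
  shows "((\<lambda>x. coeff (charpoly_mat (M x)) n) \<longlongrightarrow> coeff (charpoly_mat M0) n) F"
proof -
  let ?E = "\<lambda>A::complex^'n^'n. \<lambda>i j. (if i = j then [:0, 1:] else 0) - [:A $ i $ j:]"
  have ent: "((\<lambda>x. coeff (?E (M x) i j) m) \<longlongrightarrow> coeff (?E M0 i j) m) F" for i j m
  proof (cases m)
    case 0
    have "((\<lambda>x. M x $ i $ j) \<longlongrightarrow> M0 $ i $ j) F" using assms by blast
    hence "((\<lambda>x. - (M x $ i $ j)) \<longlongrightarrow> - (M0 $ i $ j)) F" by (rule tendsto_minus)
    then show ?thesis using 0 by (cases "i = j") simp_all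
  next
    case (Suc m')
    then show ?thesis by simp
  qed
  have "((\<lambda>x. \<Sum>p\<in>{p. p permutes (UNIV::'n set)}. of_int (sign p) * coeff (\<Prod>i\<in>UNIV. ?E (M x) i (p i)) n)
     \<longlongrightarrow> (\<Sum>p\<in>{p. p permutes (UNIV::'n set)}. of_int (sign p) * coeff (\<Prod>i\<in>UNIV. ?E M0 i (p i)) n)) F"
  proof (rule tendsto_sum)
    fix p :: "'n \<Rightarrow> 'n"
    show "((\<lambda>x. of_int (sign p) * coeff (\<Prod>i\<in>UNIV. ?E (M x) i (p i)) n)
      \<longlongrightarrow> of_int (sign p) * coeff (\<Prod>i\<in>UNIV. ?E M0 i (p i)) n) F"
      by (rule tendsto_mult_left, rule coeff_prod_tendsto) (simp, use ent in blast)
  qed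
  thus ?thesis
    unfolding charpoly_mat_def Determinants.det_def coeff_sum by (simp add: coeff_sign_mult)
qed

lemma range_measure:
  fixes f :: "'a::real_normed_vector \<Rightarrow> real"
  assumes "continuous_on UNIV f" "\<forall>k. \<bar>f k\<bar> \<le> D"
  shows "\<bar>f a - f b\<bar> \<le> measure lborel (range f)"
proof -
  have "connected (range f)" by (rule connected_continuous_image[OF assms(1) connected_UNIV])
  hence iv: "is_interval (range f)" by (simp add: is_interval_connected_1)
  hence S: "range f \<in> sets lborel" by (simp add: real_interval_borel_measurable)
  have sub: "range f \<subseteq> {-D..D}"
  proof
    fix y assume "y \<in> range f"
    then obtain k where k: "y = f k" by auto
    have "\<bar>f k\<bar> \<le> D" using assms(2) by blast
    thus "y \<in> {-D..D}" unfolding k by (simp add: abs_le_iff)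
  qed
  have "emeasure lborel (range f) \<le> emeasure lborel {-D..D}" by (rule emeasure_mono[OF sub]) simp
  also have "\<dots> < \<infinity>" by (simp add: emeasure_lborel_Icc_eq)
  finally have fm: "range f \<in> fmeasurable lborel" by (intro fmeasurableI S)
  have "{min (f a) (f b)..max (f a) (f b)} \<subseteq> range f"
    using iv unfolding is_interval_1 by (auto simp: min_def max_def)
  hence "measure lborel {min (f a) (f b)..max (f a) (f b)} \<le> measure lborel (range f)"
    by (rule measure_mono_fmeasurable) (simp_all add: fm)
  moreover have "measure lborel {min (f a) (f b)..max (f a) (f b)} = \<bar>f a - f b\<bar>"
    by (simp add: measure_lborel_Icc min_def max_def)
  ultimately show ?thesis by simp
qed



lemma band_info:
  fixes src tgt :: "'e::finite \<Rightarrow> 'v::finite" and inv :: "'e \<Rightarrow> 'e"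
    and \<tau> :: "'e \<Rightarrow> int^'d::finite" and \<alpha> :: "'e \<Rightarrow> real"
  assumes inv_inv: "\<And>e. inv (inv e) = e"
    and src_inv: "\<And>e. src (inv e) = tgt e"
    and tgt_inv: "\<And>e. tgt (inv e) = src e"
    and tau_inv: "\<And>e. \<tau> (inv e) = - \<tau> e"
    and alpha_inv: "\<And>e. \<alpha> (inv e) = - \<alpha> e"
  shows "length (eigenvalues_sorted (fiber_matrix src tgt \<alpha> \<tau> k)) = CARD('v)
    \<and> (\<forall>j<CARD('v). \<bar>band_fun src tgt \<alpha> \<tau> j k\<bar> \<le> real (max_degree src))
    \<and> (\<forall>n. trace (mpow (fiber_matrix src tgt \<alpha> \<tau> k) n) = complex_of_real (\<Sum>j<CARD('v). (band_fun src tgt \<alpha> \<tau> j k) ^ n))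
    \<and> degree (charpoly_mat (fiber_matrix src tgt \<alpha> \<tau> k)) = CARD('v)
    \<and> lead_coeff (charpoly_mat (fiber_matrix src tgt \<alpha> \<tau> k)) = 1"
proof -
  let ?M = "fiber_matrix src tgt \<alpha> \<tau> k"
  obtain b :: "'v \<Rightarrow> real" where cp: "charpoly_mat ?M = (\<Prod>i\<in>UNIV. [:- complex_of_real (b i), 1:])"
    and tr: "\<forall>n. trace (mpow ?M n) = complex_of_real (\<Sum>i\<in>UNIV. b i ^ n)"
    and bd: "\<forall>i. \<bar>b i\<bar> \<le> real (max_degree src)"
    using spectral[OF fiber_herm[where inv=inv and src=src and tgt=tgt and \<tau>=\<tau> and \<alpha>=\<alpha>, OF inv_inv src_inv tgt_inv tau_inv alpha_inv] fiber_rb] by blast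
  have es: "eigenvalues_sorted ?M = sorted_list_of_multiset (image_mset b (mset_set UNIV))"
    by (rule eig_sorted[OF cp])
  note sf = sorted_facts[of b]
  have bf: "band_fun src tgt \<alpha> \<tau> j k = sorted_list_of_multiset (image_mset b (mset_set UNIV)) ! j" for j
    unfolding band_fun_def es ..
  show ?thesis
  proof (intro conjI allI impI)
    show "length (eigenvalues_sorted ?M) = CARD('v)" using es sf(1) by simp
  next
    fix j assume j: "j < CARD('v)"
    have "band_fun src tgt \<alpha> \<tau> j k \<in> set (sorted_list_of_multiset (image_mset b (mset_set UNIV)))"
      unfolding bf by (rule nth_mem) (use j sf(1) in simp)
    hence "band_fun src tgt \<alpha> \<tau> j k \<in> range b" using sf(2) by simp
    thus "\<bar>band_fun src tgt \<alpha> \<tau> j k\<bar> \<le> real (max_degree src)" using bd by auto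
  next
    fix n
    show "trace (mpow ?M n) = complex_of_real (\<Sum>j<CARD('v). (band_fun src tgt \<alpha> \<tau> j k) ^ n)"
      unfolding bf sf(3) using tr by simp
  next
    show "degree (charpoly_mat ?M) = CARD('v)" unfolding cp
      by (subst degree_prod_eq_sum_degree) auto
  next
    show "lead_coeff (charpoly_mat ?M) = 1" unfolding cp lead_coeff_prod by simp
  qed
qed

lemma inner_idx_tendsto: "((\<lambda>k. inner_idx m k) \<longlongrightarrow> inner_idx m k0) (at k0)"
  unfolding inner_idx_def by (intro tendsto_intros tendsto_vec_nth tendsto_ident_at)

lemma fiber_tendsto:
  "((\<lambda>k. fiber_matrix src tgt \<alpha> \<tau> k $ i $ j) \<longlongrightarrow> fiber_matrix src tgt \<alpha> \<tau> k0 $ i $ j) (at k0)"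
  unfolding fiber_matrix_def vec_lambda_beta
  by (intro tendsto_sum tendsto_cis tendsto_add tendsto_const inner_idx_tendsto)

lemma band_cont:
  fixes src tgt :: "'e::finite \<Rightarrow> 'v::finite" and inv :: "'e \<Rightarrow> 'e"
    and \<tau> :: "'e \<Rightarrow> int^'d::finite" and \<alpha> :: "'e \<Rightarrow> real"
  assumes inv_inv: "\<And>e. inv (inv e) = e"
    and src_inv: "\<And>e. src (inv e) = tgt e"
    and tgt_inv: "\<And>e. tgt (inv e) = src e"
    and tau_inv: "\<And>e. \<tau> (inv e) = - \<tau> e"
    and alpha_inv: "\<And>e. \<alpha> (inv e) = - \<alpha> e"
    and j: "j < CARD('v)"
  shows "continuous_on UNIV (band_fun src tgt \<alpha> \<tau> j)"
proof (rule continuous_at_imp_continuous_on, intro ballI)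
  fix k0 :: "real^'d"
  note bi = band_info[where inv=inv and src=src and tgt=tgt and \<tau>=\<tau> and \<alpha>=\<alpha>, OF inv_inv src_inv tgt_inv tau_inv alpha_inv]
  let ?p = "charpoly_mat (fiber_matrix src tgt \<alpha> \<tau> k0)"
  let ?q = "\<lambda>k. charpoly_mat (fiber_matrix src tgt \<alpha> \<tau> k)"
  have lp: "lead_coeff ?p = 1" using bi by blast
  have dq: "\<forall>k. degree (?q k) = degree ?p \<and> lead_coeff (?q k) = 1" using bi by metis
  have cq: "\<forall>i. ((\<lambda>k. coeff (?q k) i) \<longlongrightarrow> coeff ?p i) (at k0)"
    using charpoly_coeff_tendsto[of "fiber_matrix src tgt \<alpha> \<tau>" "fiber_matrix src tgt \<alpha> \<tau> k0"] fiber_tendsto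
    by blast
  have dp: "degree ?p = CARD('v)" using bi by blast
  show "isCont (band_fun src tgt \<alpha> \<tau> j) k0"
    unfolding isCont_def
  proof (rule tendstoI)
    fix e :: real assume e: "e > 0"
    hence e2: "e / 2 > 0" by simp
    show "\<forall>\<^sub>F k in at k0. dist (band_fun src tgt \<alpha> \<tau> j k) (band_fun src tgt \<alpha> \<tau> j k0) < e"
      using roots_cont[OF lp dq cq e2]
    proof (rule eventually_mono)
      fix k assume R: "rel_mset (\<lambda>a b. cmod (a - b) \<le> e / 2) (proots ?p) (proots (?q k))"
      have R': "rel_mset (\<lambda>a b. \<bar>a - b\<bar> \<le> e / 2) (image_mset Re (proots ?p)) (image_mset Re (proots (?q k)))"
        unfolding multiset.rel_map
        by (rule multiset.rel_mono_strong[OF R]) (metis abs_Re_le_cmod minus_complex.sel(1) order_trans)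
      have js: "j < size (image_mset Re (proots ?p))" using j dp by (simp add: size_proots_complex)
      have "\<bar>band_fun src tgt \<alpha> \<tau> j k0 - band_fun src tgt \<alpha> \<tau> j k\<bar> \<le> e / 2"
        using sorted_close[OF R' js] unfolding band_fun_def eigenvalues_sorted_def .
      thus "dist (band_fun src tgt \<alpha> \<tau> j k) (band_fun src tgt \<alpha> \<tau> j k0) < e"
        using e by (simp add: dist_real_def abs_minus_commute)
    qed
  qed
qed

lemma pow_diff_bound:
  fixes x y D :: real
  assumes "\<bar>x\<bar> \<le> D" "\<bar>y\<bar> \<le> D"
  shows "\<bar>x ^ n - y ^ n\<bar> \<le> real n * D ^ (n - 1) * \<bar>x - y\<bar>"
proof -
  have D: "D \<ge> 0" using assms(1) by linarith
  have "\<bar>\<Sum>i<n. y ^ (n - Suc i) * x ^ i\<bar> \<le> (\<Sum>i<n. \<bar>y\<bar> ^ (n - Suc i) * \<bar>x\<bar> ^ i)"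
    by (rule order_trans[OF sum_abs]) (simp add: abs_mult power_abs)
  also have "\<dots> \<le> (\<Sum>i<n. D ^ (n - Suc i) * D ^ i)"
    by (intro sum_mono mult_mono power_mono) (use assms D in auto)
  also have "\<dots> = (\<Sum>i<n. D ^ (n - 1))"
    by (rule sum.cong[OF refl]) (simp add: power_add[symmetric])
  also have "\<dots> = real n * D ^ (n - 1)" by simp
  finally have b: "\<bar>\<Sum>i<n. y ^ (n - Suc i) * x ^ i\<bar> \<le> real n * D ^ (n - 1)" .
  have "\<bar>x ^ n - y ^ n\<bar> = \<bar>x - y\<bar> * \<bar>\<Sum>i<n. y ^ (n - Suc i) * x ^ i\<bar>"
    by (simp add: power_diff_sumr2 abs_mult)
  also have "\<dots> \<le> \<bar>x - y\<bar> * (real n * D ^ (n - 1))"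
    by (rule mult_left_mono[OF b]) simp
  finally show ?thesis by (simp add: ac_simps)
qed



lemma cis_sum: "cis (sum f A) = (\<Prod>x\<in>A. cis (f x))"
  by (induct A rule: infinite_finite_induct) (simp_all add: cis_mult[symmetric])

lemma geom_cis_sum:
  fixes m :: int and N :: nat
  assumes m0: "m \<noteq> 0" and mN: "\<bar>m\<bar> < int N"
  shows "(\<Sum>t<N. cis (of_int m * (2 * pi * real t / real N))) = 0"
proof -
  define w where "w = cis (2 * pi * of_int m / real N)"
  have N: "N > 0" using mN by linarith
  have t: "cis (of_int m * (2 * pi * real t / real N)) = w ^ t" for t
    unfolding w_def Complex.DeMoivre by (rule arg_cong[where f=cis]) (simp add: field_simps)
  have "w ^ N = cis (2 * pi * of_int m)"
    unfolding w_def Complex.DeMoivre using N by (simp add: field_simps)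
  also have "\<dots> = 1" by (rule cis_multiple_2pi) simp
  finally have wN: "w ^ N = 1" .
  have w1: "w \<noteq> 1"
  proof
    assume "w = 1"
    hence "Re w = 1" by simp
    hence "cos (2 * pi * of_int m / real N) = 1" unfolding w_def by simp
    then obtain z :: int where z: "2 * pi * of_int m / real N = of_int z * 2 * pi"
      unfolding cos_one_2pi_int by blast
    hence "of_int m = of_int z * real N" using N by (simp add: field_simps)
    hence mz: "m = z * int N" by (metis of_int_eq_iff of_int_mult of_int_of_nat_eq)
    show False
    proof (cases "z = 0")
      case True
      then show False using mz m0 by simp
    next
      case False
      hence "\<bar>z\<bar> \<ge> 1" by linarith
      hence "\<bar>m\<bar> \<ge> int N" unfolding mz abs_mult by (simp add: mult_le_cancel_right1)
      then show False using mN by simp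
    qed
  qed
  have "(\<Sum>t<N. cis (of_int m * (2 * pi * real t / real N))) = (\<Sum>t<N. w ^ t)" by (rule sum.cong[OF refl]) (rule t)
  also have "\<dots> = 0" using w1 wN by (simp add: sum_gp_strict)
  finally show ?thesis .
qed

lemma grid_sum:
  fixes m :: "int^'d::finite" and N :: nat
  assumes mN: "\<forall>j. \<bar>m $ j\<bar> < int N"
  shows "(\<Sum>s\<in>PiE (UNIV::'d set) (\<lambda>_. {..<N}). cis (inner_idx m (\<chi> j. 2 * pi * real (s j) / real N)))
    = (if m = 0 then of_nat (N ^ CARD('d)) else 0)"
proof -
  have "(\<Sum>s\<in>PiE (UNIV::'d set) (\<lambda>_. {..<N}). cis (inner_idx m (\<chi> j. 2 * pi * real (s j) / real N)))
     = (\<Sum>s\<in>PiE (UNIV::'d set) (\<lambda>_. {..<N}). \<Prod>j\<in>UNIV. cis (of_int (m $ j) * (2 * pi * real (s j) / real N)))"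
    by (simp add: inner_idx_def cis_sum)
  also have "\<dots> = (\<Prod>j\<in>UNIV. \<Sum>t<N. cis (of_int (m $ j) * (2 * pi * real t / real N)))"
    by (rule prod_sum_PiE[symmetric]) auto
  also have "\<dots> = (if m = 0 then of_nat (N ^ CARD('d)) else 0)"
  proof (cases "m = 0")
    case True
    then show ?thesis by simp
  next
    case False
    then obtain j where j: "m $ j \<noteq> 0" by (metis Finite_Cartesian_Product.vec_eq_iff zero_index)
    have "(\<Sum>t<N. cis (of_int (m $ j) * (2 * pi * real t / real N))) = 0"
      by (rule geom_cis_sum[OF j]) (use mN in blast)
    hence "(\<Prod>j\<in>UNIV. \<Sum>t<N. cis (of_int (m $ j) * (2 * pi * real t / real N))) = 0"
      by (intro prod_zero) auto
    with False show ?thesis by simp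
  qed
  finally show ?thesis .
qed

lemma cos_int_pi: "cos (x + pi * of_int s) = (if even s then cos x else - cos x)"
proof -
  have "sin (of_int s * pi) = 0" by (simp add: sin_times_pi_eq_0)
  hence "sin (pi * of_int s) = 0" by (simp add: mult.commute)
  thus ?thesis by (simp add: cos_add cos_npi_int)
qed



theorem corollary4p1:
  fixes src tgt :: "'e::finite \<Rightarrow> 'v::finite"
    and inv :: "'e \<Rightarrow> 'e"
    and \<tau> :: "'e \<Rightarrow> int^'d::finite"
    and \<alpha> :: "'e \<Rightarrow> real"
    and n :: nat
  assumes inv_inv: "\<And>e. inv (inv e) = e"
    and inv_neq: "\<And>e. inv e \<noteq> e"
    and src_inv: "\<And>e. src (inv e) = tgt e"
    and tgt_inv: "\<And>e. tgt (inv e) = src e"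
    and tau_inv: "\<And>e. \<tau> (inv e) = - \<tau> e"
    and alpha_inv: "\<And>e. \<alpha> (inv e) = - \<alpha> e"
    and connected: "\<And>x y m. \<exists>c. is_walk src tgt x y c \<and> walk_index \<tau> c = m"
    and n_pos: "n \<ge> 1"
  shows "total_bandwidth src tgt \<alpha> \<tau> \<ge>
           max \<bar>\<Sum>c\<in>cycles_plus src tgt \<tau> n. cos (flux \<alpha> c)\<bar>
               (2 * \<bar>\<Sum>c\<in>cycles_odd src tgt \<tau> n. cos (flux \<alpha> c)\<bar>)
           / (real n * real (max_degree src) ^ (n - 1))"
proof -
  let ?\<nu> = "CARD('v)"
  let ?lam = "band_fun src tgt \<alpha> \<tau>"
  define D where "D = real (max_degree src)"
  define T where "T = total_bandwidth src tgt \<alpha> \<tau>"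
  define K where "K = real n * D ^ (n - 1)"
  define L where "L k = (\<Sum>j<?\<nu>. (?lam j k) ^ n)" for k
  define Cyc where "Cyc = {c. length c = n \<and> is_cycle src tgt c}"
  define \<phi> where "\<phi> c = flux \<alpha> c" for c
  define m where "m c = walk_index \<tau> c" for c
  note bi = band_info[where inv=inv and src=src and tgt=tgt and \<tau>=\<tau> and \<alpha>=\<alpha>, OF inv_inv src_inv tgt_inv tau_inv alpha_inv]
  note bc = band_cont[where inv=inv and src=src and tgt=tgt and \<tau>=\<tau> and \<alpha>=\<alpha>, OF inv_inv src_inv tgt_inv tau_inv alpha_inv]
  have D0: "D \<ge> 0" unfolding D_def by simp
  have K0: "K \<ge> 0" unfolding K_def using D0 by simp
  have T0: "T \<ge> 0" unfolding T_def total_bandwidth_def by (intro sum_nonneg) simp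
  have finCyc: "finite Cyc"
  proof (rule finite_subset)
    show "Cyc \<subseteq> {xs. set xs \<subseteq> UNIV \<and> length xs = n}" unfolding Cyc_def by auto
    show "finite {xs. set xs \<subseteq> (UNIV::'e set) \<and> length xs = n}" by (rule finite_lists_length_eq) simp
  qed
  have LF: "L k = (\<Sum>c\<in>Cyc. cos (\<phi> c + inner_idx (m c) k))" for k
  proof -
    have "complex_of_real (L k) = trace (mpow (fiber_matrix src tgt \<alpha> \<tau> k) n)"
      unfolding L_def using bi by metis
    also have "\<dots> = (\<Sum>c\<in>Cyc. cis (\<phi> c + inner_idx (m c) k))"
      unfolding Cyc_def \<phi>_def m_def by (rule fiber_trace[OF n_pos])
    finally have "L k = Re (\<Sum>c\<in>Cyc. cis (\<phi> c + inner_idx (m c) k))"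
      by (metis Re_complex_of_real)
    thus ?thesis by (simp add: Re_sum)
  qed
  have key: "\<bar>L a - L b\<bar> \<le> K * T" for a b
  proof -
    have "\<bar>L a - L b\<bar> = \<bar>\<Sum>j<?\<nu>. ((?lam j a) ^ n - (?lam j b) ^ n)\<bar>"
      unfolding L_def by (simp add: sum_subtractf)
    also have "\<dots> \<le> (\<Sum>j<?\<nu>. \<bar>(?lam j a) ^ n - (?lam j b) ^ n\<bar>)" by (rule sum_abs)
    also have "\<dots> \<le> (\<Sum>j<?\<nu>. K * measure lborel (range (?lam j)))"
    proof (rule sum_mono)
      fix j assume "j \<in> {..<?\<nu>}"
      hence j: "j < ?\<nu>" by simp
      have bd: "\<forall>k. \<bar>?lam j k\<bar> \<le> D" using bi j unfolding D_def by blast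
      have "\<bar>(?lam j a) ^ n - (?lam j b) ^ n\<bar> \<le> K * \<bar>?lam j a - ?lam j b\<bar>"
        unfolding K_def using pow_diff_bound bd by blast
      also have "\<dots> \<le> K * measure lborel (range (?lam j))"
        by (rule mult_left_mono[OF range_measure[OF bc[OF j] bd] K0])
      finally show "\<bar>(?lam j a) ^ n - (?lam j b) ^ n\<bar> \<le> K * measure lborel (range (?lam j))" .
    qed
    also have "\<dots> = K * T" unfolding T_def total_bandwidth_def by (simp add: sum_distrib_left)
    finally show ?thesis .
  qed
  have odd_part: "2 * \<bar>\<Sum>c\<in>cycles_odd src tgt \<tau> n. cos (flux \<alpha> c)\<bar> \<le> K * T"
  proof -
    define k1 :: "real^'d" where "k1 = (\<chi> j. pi)"
    have ik: "inner_idx z k1 = pi * of_int (\<Sum>j\<in>UNIV. z $ j)" for z :: "int^'d"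
      unfolding inner_idx_def k1_def by (simp add: sum_distrib_left mult.commute)
    have "L 0 - L k1 = (\<Sum>c\<in>Cyc. cos (\<phi> c) - cos (\<phi> c + pi * of_int (\<Sum>j\<in>UNIV. m c $ j)))"
      unfolding LF ik by (simp add: sum_subtractf)
    also have "\<dots> = (\<Sum>c\<in>Cyc. if odd (\<Sum>j\<in>UNIV. m c $ j) then 2 * cos (\<phi> c) else 0)"
      by (rule sum.cong[OF refl]) (simp add: cos_int_pi del: of_int_sum)
    also have "\<dots> = (\<Sum>c\<in>{c \<in> Cyc. odd (\<Sum>j\<in>UNIV. m c $ j)}. 2 * cos (\<phi> c))"
      by (rule sum.inter_filter[OF finCyc, symmetric])
    also have "{c \<in> Cyc. odd (\<Sum>j\<in>UNIV. m c $ j)} = cycles_odd src tgt \<tau> n"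
      unfolding Cyc_def m_def cycles_odd_def by auto
    finally have "L 0 - L k1 = 2 * (\<Sum>c\<in>cycles_odd src tgt \<tau> n. cos (flux \<alpha> c))"
      by (simp add: sum_distrib_left \<phi>_def)
    thus ?thesis using key[of 0 k1] by simp
  qed
  have plus_part: "\<bar>\<Sum>c\<in>cycles_plus src tgt \<tau> n. cos (flux \<alpha> c)\<bar> \<le> K * T"
  proof -
    define N where "N = 1 + (\<Sum>c\<in>Cyc. \<Sum>j\<in>UNIV. nat \<bar>m c $ j\<bar>)"
    have mN: "\<forall>j. \<bar>m c $ j\<bar> < int N" if c: "c \<in> Cyc" for c
    proof
      fix j
      have "nat \<bar>m c $ j\<bar> \<le> (\<Sum>j\<in>UNIV. nat \<bar>m c $ j\<bar>)" by (rule member_le_sum) auto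
      also have "\<dots> \<le> (\<Sum>c\<in>Cyc. \<Sum>j\<in>UNIV. nat \<bar>m c $ j\<bar>)"
        by (rule member_le_sum[OF c _ finCyc]) auto
      finally show "\<bar>m c $ j\<bar> < int N" unfolding N_def by linarith
    qed
    define G where "G = PiE (UNIV::'d set) (\<lambda>_. {..<N})"
    define ks where "ks s = (\<chi> j. 2 * pi * real (s j) / real N)" for s :: "'d \<Rightarrow> nat"
    have finG: "finite G" unfolding G_def by (rule finite_PiE) auto
    have cardG: "card G = N ^ CARD('d)" unfolding G_def by (simp add: card_PiE)
    have avg: "(\<Sum>s\<in>G. cos (\<phi> c + inner_idx (m c) (ks s))) = (if m c = 0 then real (N ^ CARD('d)) * cos (\<phi> c) else 0)"
      if c: "c \<in> Cyc" for c
    proof -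
      have "(\<Sum>s\<in>G. cis (\<phi> c + inner_idx (m c) (ks s))) = cis (\<phi> c) * (\<Sum>s\<in>G. cis (inner_idx (m c) (ks s)))"
        by (simp add: sum_distrib_left cis_mult)
      also have "\<dots> = cis (\<phi> c) * (if m c = 0 then of_nat (N ^ CARD('d)) else 0)"
        unfolding G_def ks_def by (subst grid_sum[OF mN[OF c]]) simp
      finally have "(\<Sum>s\<in>G. cos (\<phi> c + inner_idx (m c) (ks s))) = Re (cis (\<phi> c) * (if m c = 0 then of_nat (N ^ CARD('d)) else 0))"
        by (metis (no_types, lifting) Re_sum cis.sel(1) sum.cong)
      thus ?thesis by simp
    qed
    have "(\<Sum>s\<in>G. L 0 - L (ks s)) = (\<Sum>s\<in>G. \<Sum>c\<in>Cyc. cos (\<phi> c) - cos (\<phi> c + inner_idx (m c) (ks s)))"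
      unfolding LF by (simp add: sum_subtractf)
    also have "\<dots> = (\<Sum>c\<in>Cyc. \<Sum>s\<in>G. cos (\<phi> c) - cos (\<phi> c + inner_idx (m c) (ks s)))"
      by (rule sum.swap)
    also have "\<dots> = (\<Sum>c\<in>Cyc. if m c \<noteq> 0 then real (N ^ CARD('d)) * cos (\<phi> c) else 0)"
    proof (rule sum.cong[OF refl])
      fix c assume c: "c \<in> Cyc"
      show "(\<Sum>s\<in>G. cos (\<phi> c) - cos (\<phi> c + inner_idx (m c) (ks s))) =
          (if m c \<noteq> 0 then real (N ^ CARD('d)) * cos (\<phi> c) else 0)"
        using avg[OF c] cardG by (simp add: sum_subtractf)
    qed
    also have "\<dots> = (\<Sum>c\<in>{c \<in> Cyc. m c \<noteq> 0}. real (N ^ CARD('d)) * cos (\<phi> c))"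
      by (rule sum.inter_filter[OF finCyc, symmetric])
    also have "{c \<in> Cyc. m c \<noteq> 0} = cycles_plus src tgt \<tau> n"
      unfolding Cyc_def m_def cycles_plus_def by auto
    finally have S: "(\<Sum>s\<in>G. L 0 - L (ks s)) = real (N ^ CARD('d)) * (\<Sum>c\<in>cycles_plus src tgt \<tau> n. cos (flux \<alpha> c))"
      by (simp add: sum_distrib_left \<phi>_def)
    have "real (N ^ CARD('d)) * \<bar>\<Sum>c\<in>cycles_plus src tgt \<tau> n. cos (flux \<alpha> c)\<bar> = \<bar>\<Sum>s\<in>G. L 0 - L (ks s)\<bar>"
      unfolding S by (simp add: abs_mult)
    also have "\<dots> \<le> (\<Sum>s\<in>G. \<bar>L 0 - L (ks s)\<bar>)" by (rule sum_abs)
    also have "\<dots> \<le> (\<Sum>s\<in>G. K * T)" by (rule sum_mono) (rule key)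
    also have "\<dots> = real (N ^ CARD('d)) * (K * T)" using cardG by simp
    finally have "real (N ^ CARD('d)) * \<bar>\<Sum>c\<in>cycles_plus src tgt \<tau> n. cos (flux \<alpha> c)\<bar> \<le> real (N ^ CARD('d)) * (K * T)" .
    moreover have "real (N ^ CARD('d)) > 0"
    proof -
      have "N > 0" unfolding N_def by simp
      thus ?thesis by simp
    qed
    ultimately show ?thesis by simp
  qed
  have mx: "max \<bar>\<Sum>c\<in>cycles_plus src tgt \<tau> n. cos (flux \<alpha> c)\<bar>
               (2 * \<bar>\<Sum>c\<in>cycles_odd src tgt \<tau> n. cos (flux \<alpha> c)\<bar>) \<le> K * T"
    using plus_part odd_part by simp
  show ?thesis
  proof (cases "K = 0")
    case True
    hence z: "real n * real (max_degree src) ^ (n - 1) = 0" unfolding K_def D_def .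
    show ?thesis unfolding z using T0 unfolding T_def by simp
  next
    case False
    hence "K > 0" using K0 by simp
    with mx show ?thesis unfolding K_def D_def T_def[symmetric] by (simp add: pos_divide_le_eq mult.commute)
  qed
qed


end
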